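(* Let $V$ be a finite set of discrete random variables with joint distribution $P$ and let $\mathcal{G}_{\texttt{FD}}$ be the (acyclic) FD-induced graph on $V$. Run the following procedure. Stage 1: let $\mathcal{S}_2$ be the graph on $V$ with no edges; for each node compute its depth $d(X)$ in $\mathcal{G}_{\texttt{FD}}$ (length of a longest directed path from a root, i.e. a node without parents, to $X$); while the current $\mathcal{G}_{\texttt{FD}}$ has a node with at least one parent, pick a node $X$ of maximal depth, pick any parent $Y$ of $X$ in the current $\mathcal{G}_{\texttt{FD}}$ (the paper picks one of minimal cardinality), add the undirected edge $X-Y$ to $\mathcal{S}_2$, and delete $X$ and its incident edges from $\mathcal{G}_{\texttt{FD}}$. Let $R$ be the set of nodes remaining (the root nodes of the original $\mathcal{G}_{\texttt{FD}}$). Stage 2: let $\mathcal{S}_1$ be the skeleton over $R$ returned by standard (FCI) skeleton learning on $R$, which is assumed to be a harmonious skeleton over $R$ with respect to the marginal of $P$ on $R$. Then $\mathcal{S}=\mathcal{S}_1\cup\mathcal{S}_2$ is a harmonious skeleton over $V$ with respect to $P$.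
   Context: Standing assumption: every variable takes at least two values with positive probability. $X\xrightarrow{\texttt{FD}} Y$ means $Y=f(X)$ almost surely for a deterministic $f$; $\mathcal{G}_{\texttt{FD}}$ has vertex set $V$ and a directed edge $(X,Y)$ whenever $X\xrightarrow{\texttt{FD}} Y$. A directed mixed graph has at most one edge between two nodes, directed ($\to$) or bidirected ($\leftrightarrow$). On a path, a non-endpoint node is a collider if both adjacent edges have arrowheads into it. A path is blocked by a set $W$ if some non-endpoint node is either a non-collider in $W$ or a collider such that neither it nor any descendant is in $W$; $X,Y$ are m-separated by $W$ if all paths between them are blocked. A MAG is a directed mixed graph with no directed or almost directed cycle ($X\to\cdots\to Z\leftrightarrow X$) in which every non-adjacent pair is m-separated by some set. $P$ satisfies GMP w.r.t. a MAG $\mathcal{G}$ if m-separation of $X,Y$ by $W$ in $\mathcal{G}$ implies $X\perp Y\mid W$ under $P$. An undirected graph $\mathcal{S}$ is a harmonious skeleton w.r.t. $P$ if (1) some MAG $\mathcal{G}$ has the same adjacencies as $\mathcal{S}$, (2) $P$ satisfies GMP w.r.t. $\mathcal{G}$, and (3) no proper subgraph of $\mathcal{S}$ (obtained by deleting edges) satisfies (1) and (2). *)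

theory Defs
  imports "HOL-Probability.Probability"
begin

text \<open>A joint distribution of the discrete random variables indexed by 'v is a pmf
  over assignments 'v => 'a.  Variable X is the coordinate map (\<lambda>\<omega>. \<omega> X).\<close>

definition fdep :: "('v \<Rightarrow> 'a) pmf \<Rightarrow> 'v \<Rightarrow> 'v \<Rightarrow> bool" where
  "fdep P X Y \<longleftrightarrow> (\<exists>f. AE \<omega> in measure_pmf P. \<omega> Y = f (\<omega> X))"

definition fd_graph :: "('v \<Rightarrow> 'a) pmf \<Rightarrow> 'v set \<Rightarrow> ('v \<times> 'v) set" where
  "fd_graph P V = {(X, Y). X \<in> V \<and> Y \<in> V \<and> X \<noteq> Y \<and> fdep P X Y}"

definition cond_indep :: "('v \<Rightarrow> 'a) pmf \<Rightarrow> 'v \<Rightarrow> 'v \<Rightarrow> 'v set \<Rightarrow> bool" where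
  "cond_indep P X Y W \<longleftrightarrow>
     (\<forall>x y w.
        measure_pmf.prob P {\<omega>. \<omega> X = x \<and> \<omega> Y = y \<and> (\<forall>v\<in>W. \<omega> v = w v)}
          * measure_pmf.prob P {\<omega>. \<forall>v\<in>W. \<omega> v = w v}
        = measure_pmf.prob P {\<omega>. \<omega> X = x \<and> (\<forall>v\<in>W. \<omega> v = w v)}
          * measure_pmf.prob P {\<omega>. \<omega> Y = y \<and> (\<forall>v\<in>W. \<omega> v = w v)})"

type_synonym 'v mixed_graph = "('v \<times> 'v) set \<times> 'v set set"

definition dir :: "'v mixed_graph \<Rightarrow> ('v \<times> 'v) set" where "dir G = fst G"
definition bid :: "'v mixed_graph \<Rightarrow> 'v set set" where "bid G = snd G"

definition adj :: "'v mixed_graph \<Rightarrow> 'v \<Rightarrow> 'v \<Rightarrow> bool" where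
  "adj G x y \<longleftrightarrow> (x, y) \<in> dir G \<or> (y, x) \<in> dir G \<or> {x, y} \<in> bid G"

definition arrow_into :: "'v mixed_graph \<Rightarrow> 'v \<Rightarrow> 'v \<Rightarrow> bool" where
  "arrow_into G u v \<longleftrightarrow> (u, v) \<in> dir G \<or> {u, v} \<in> bid G"

definition descendants :: "'v mixed_graph \<Rightarrow> 'v \<Rightarrow> 'v set" where
  "descendants G v = {w. (v, w) \<in> (dir G)\<^sup>*}"

definition mg_path :: "'v mixed_graph \<Rightarrow> 'v \<Rightarrow> 'v \<Rightarrow> 'v list \<Rightarrow> bool" where
  "mg_path G X Y xs \<longleftrightarrow> 2 \<le> length xs \<and> distinct xs \<and> hd xs = X \<and> last xs = Y \<and>
     successively (adj G) xs"

definition is_collider :: "'v mixed_graph \<Rightarrow> 'v list \<Rightarrow> nat \<Rightarrow> bool" where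
  "is_collider G xs i \<longleftrightarrow> arrow_into G (xs ! (i - 1)) (xs ! i) \<and> arrow_into G (xs ! (i + 1)) (xs ! i)"

definition blocked :: "'v mixed_graph \<Rightarrow> 'v list \<Rightarrow> 'v set \<Rightarrow> bool" where
  "blocked G xs W \<longleftrightarrow> (\<exists>i. 0 < i \<and> i < length xs - 1 \<and>
      ((\<not> is_collider G xs i \<and> xs ! i \<in> W) \<or>
       (is_collider G xs i \<and> descendants G (xs ! i) \<inter> W = {})))"

definition m_separated :: "'v mixed_graph \<Rightarrow> 'v \<Rightarrow> 'v \<Rightarrow> 'v set \<Rightarrow> bool" where
  "m_separated G X Y W \<longleftrightarrow> (\<forall>xs. mg_path G X Y xs \<longrightarrow> blocked G xs W)"

definition is_MAG :: "'v set \<Rightarrow> 'v mixed_graph \<Rightarrow> bool" where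
  "is_MAG U G \<longleftrightarrow>
     dir G \<subseteq> U \<times> U \<and>
     (\<forall>e\<in>bid G. \<exists>x y. e = {x, y} \<and> x \<noteq> y \<and> x \<in> U \<and> y \<in> U) \<and>
     (\<forall>x. (x, x) \<notin> dir G) \<and>
     (\<forall>x y. (x, y) \<in> dir G \<longrightarrow> (y, x) \<notin> dir G \<and> {x, y} \<notin> bid G) \<and>
     acyclic (dir G) \<and>
     (\<forall>x z. {x, z} \<in> bid G \<longrightarrow> (x, z) \<notin> (dir G)\<^sup>+) \<and>
     (\<forall>x\<in>U. \<forall>y\<in>U. x \<noteq> y \<and> \<not> adj G x y \<longrightarrow> (\<exists>W \<subseteq> U - {x, y}. m_separated G x y W))"

definition GMP :: "('v \<Rightarrow> 'a) pmf \<Rightarrow> 'v set \<Rightarrow> 'v mixed_graph \<Rightarrow> bool" where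
  "GMP P U G \<longleftrightarrow> (\<forall>X\<in>U. \<forall>Y\<in>U. \<forall>W. X \<noteq> Y \<and> W \<subseteq> U - {X, Y} \<and> m_separated G X Y W
       \<longrightarrow> cond_indep P X Y W)"

definition skeleton :: "'v mixed_graph \<Rightarrow> 'v set set" where
  "skeleton G = {{x, y} | x y. adj G x y}"

definition sat12 :: "('v \<Rightarrow> 'a) pmf \<Rightarrow> 'v set \<Rightarrow> 'v set set \<Rightarrow> bool" where
  "sat12 P U S \<longleftrightarrow> (\<exists>G. is_MAG U G \<and> skeleton G = S \<and> GMP P U G)"

text \<open>Harmonious skeleton over the vertex set U w.r.t. (the marginal on U of) P.\<close>
definition harmonious :: "('v \<Rightarrow> 'a) pmf \<Rightarrow> 'v set \<Rightarrow> 'v set set \<Rightarrow> bool" where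
  "harmonious P U S \<longleftrightarrow> sat12 P U S \<and> \<not> (\<exists>S'. S' \<subset> S \<and> sat12 P U S')"

definition fd_root :: "('v \<Rightarrow> 'a) pmf \<Rightarrow> 'v set \<Rightarrow> 'v \<Rightarrow> bool" where
  "fd_root P V X \<longleftrightarrow> X \<in> V \<and> (\<forall>Y. (Y, X) \<notin> fd_graph P V)"

definition fd_depth :: "('v \<Rightarrow> 'a) pmf \<Rightarrow> 'v set \<Rightarrow> 'v \<Rightarrow> nat" where
  "fd_depth P V X = Max {length xs - 1 | xs. xs \<noteq> [] \<and> distinct xs \<and>
       successively (\<lambda>a b. (a, b) \<in> fd_graph P V) xs \<and> fd_root P V (hd xs) \<and> last xs = X}"

text \<open>One iteration: state = (current node set of G_FD, edges of S_2).\<close>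
inductive stage1_step :: "('v \<Rightarrow> 'a) pmf \<Rightarrow> 'v set \<Rightarrow> 'v set \<times> 'v set set \<Rightarrow> 'v set \<times> 'v set set \<Rightarrow> bool"
  for P V where
  "\<lbrakk> X \<in> C; \<forall>Z\<in>C. fd_depth P V Z \<le> fd_depth P V X; Y \<in> C; (Y, X) \<in> fd_graph P V \<rbrakk>
   \<Longrightarrow> stage1_step P V (C, S) (C - {X}, insert {X, Y} S)"

definition stage1_run :: "('v \<Rightarrow> 'a) pmf \<Rightarrow> 'v set \<Rightarrow> 'v set \<Rightarrow> 'v set set \<Rightarrow> bool" where
  "stage1_run P V R S2 \<longleftrightarrow> (stage1_step P V)\<^sup>*\<^sup>* (V, {}) (R, S2) \<and>
     \<not> (\<exists>X\<in>R. \<exists>Y\<in>R. (Y, X) \<in> fd_graph P V)"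

end

theory Submission
  imports Defs
begin

abbreviation prb :: "'w pmf \<Rightarrow> 'w set \<Rightarrow> real" where "prb P A \<equiv> measure_pmf.prob P A"

definition ci :: "'w pmf \<Rightarrow> ('w \<Rightarrow> 'b) \<Rightarrow> ('w \<Rightarrow> 'c) \<Rightarrow> ('w \<Rightarrow> 'd) \<Rightarrow> bool" where
  "ci P f g h \<longleftrightarrow> (\<forall>a b c. prb P {\<omega>. f \<omega> = a \<and> g \<omega> = b \<and> h \<omega> = c} * prb P {\<omega>. h \<omega> = c}
      = prb P {\<omega>. f \<omega> = a \<and> h \<omega> = c} * prb P {\<omega>. g \<omega> = b \<and> h \<omega> = c})"

lemma prb_cong_supp:
  assumes "\<And>\<omega>. \<omega> \<in> set_pmf P \<Longrightarrow> \<omega> \<in> A \<longleftrightarrow> \<omega> \<in> B"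
  shows "prb P A = prb P B"
proof -
  have "A \<inter> set_pmf P = B \<inter> set_pmf P" using assms by blast
  then show ?thesis by (metis measure_Int_set_pmf)
qed

lemma prb_mono: "A \<subseteq> B \<Longrightarrow> prb P A \<le> prb P B"
  by (rule measure_pmf.finite_measure_mono) auto

lemma ci_sym: "ci P f g h \<Longrightarrow> ci P g f h"
  unfolding ci_def
proof (intro allI)
  fix a b c assume H: "\<forall>a b c. prb P {\<omega>. f \<omega> = a \<and> g \<omega> = b \<and> h \<omega> = c} * prb P {\<omega>. h \<omega> = c}
      = prb P {\<omega>. f \<omega> = a \<and> h \<omega> = c} * prb P {\<omega>. g \<omega> = b \<and> h \<omega> = c}"
  have "{\<omega>. g \<omega> = a \<and> f \<omega> = b \<and> h \<omega> = c} = {\<omega>. f \<omega> = b \<and> g \<omega> = a \<and> h \<omega> = c}" by auto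
  then show "prb P {\<omega>. g \<omega> = a \<and> f \<omega> = b \<and> h \<omega> = c} * prb P {\<omega>. h \<omega> = c} =
           prb P {\<omega>. g \<omega> = a \<and> h \<omega> = c} * prb P {\<omega>. f \<omega> = b \<and> h \<omega> = c}"
    using H[rule_format, of b a c] by (simp add: mult.commute)
qed

lemma ci_cong:
  assumes "ci P f g h" "\<And>\<omega>. \<omega> \<in> set_pmf P \<Longrightarrow> f' \<omega> = f \<omega>" "\<And>\<omega>. \<omega> \<in> set_pmf P \<Longrightarrow> g' \<omega> = g \<omega>"
  shows "ci P f' g' h"
  unfolding ci_def
proof (intro allI)
  fix a b c
  have 1: "prb P {\<omega>. f' \<omega> = a \<and> g' \<omega> = b \<and> h \<omega> = c} = prb P {\<omega>. f \<omega> = a \<and> g \<omega> = b \<and> h \<omega> = c}"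
    by (rule prb_cong_supp) (use assms in auto)
  have 2: "prb P {\<omega>. f' \<omega> = a \<and> h \<omega> = c} = prb P {\<omega>. f \<omega> = a \<and> h \<omega> = c}"
    by (rule prb_cong_supp) (use assms in auto)
  have 3: "prb P {\<omega>. g' \<omega> = b \<and> h \<omega> = c} = prb P {\<omega>. g \<omega> = b \<and> h \<omega> = c}"
    by (rule prb_cong_supp) (use assms in auto)
  show "prb P {\<omega>. f' \<omega> = a \<and> g' \<omega> = b \<and> h \<omega> = c} * prb P {\<omega>. h \<omega> = c} =
         prb P {\<omega>. f' \<omega> = a \<and> h \<omega> = c} * prb P {\<omega>. g' \<omega> = b \<and> h \<omega> = c}"
    unfolding 1 2 3 using assms(1) unfolding ci_def by blast
qed

lemma ci_cond_iso:
  assumes "ci P f g h" "\<And>\<omega> \<omega>'. \<omega> \<in> set_pmf P \<Longrightarrow> \<omega>' \<in> set_pmf P \<Longrightarrow> h' \<omega> = h' \<omega>' \<longleftrightarrow> h \<omega> = h \<omega>'"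
  shows "ci P f g h'"
  unfolding ci_def
proof (intro allI)
  fix a b c
  show "prb P {\<omega>. f \<omega> = a \<and> g \<omega> = b \<and> h' \<omega> = c} * prb P {\<omega>. h' \<omega> = c} =
         prb P {\<omega>. f \<omega> = a \<and> h' \<omega> = c} * prb P {\<omega>. g \<omega> = b \<and> h' \<omega> = c}"
  proof (cases "\<exists>\<omega>0\<in>set_pmf P. h' \<omega>0 = c")
    case True
    then obtain \<omega>0 where w0: "\<omega>0 \<in> set_pmf P" "h' \<omega>0 = c" by blast
    have e: "\<And>\<omega>. \<omega> \<in> set_pmf P \<Longrightarrow> h' \<omega> = c \<longleftrightarrow> h \<omega> = h \<omega>0" using assms(2) w0 by metis
    have 1: "prb P {\<omega>. f \<omega> = a \<and> g \<omega> = b \<and> h' \<omega> = c} = prb P {\<omega>. f \<omega> = a \<and> g \<omega> = b \<and> h \<omega> = h \<omega>0}"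
      by (rule prb_cong_supp) (use e in auto)
    have 2: "prb P {\<omega>. f \<omega> = a \<and> h' \<omega> = c} = prb P {\<omega>. f \<omega> = a \<and> h \<omega> = h \<omega>0}"
      by (rule prb_cong_supp) (use e in auto)
    have 3: "prb P {\<omega>. g \<omega> = b \<and> h' \<omega> = c} = prb P {\<omega>. g \<omega> = b \<and> h \<omega> = h \<omega>0}"
      by (rule prb_cong_supp) (use e in auto)
    have 4: "prb P {\<omega>. h' \<omega> = c} = prb P {\<omega>. h \<omega> = h \<omega>0}"
      by (rule prb_cong_supp) (use e in auto)
    show ?thesis unfolding 1 2 3 4 using assms(1) unfolding ci_def by blast
  next
    case False
    have "prb P {\<omega>. h' \<omega> = c} = prb P {}" by (rule prb_cong_supp) (use False in auto)
    moreover have "prb P {\<omega>. f \<omega> = a \<and> h' \<omega> = c} = prb P {}" by (rule prb_cong_supp) (use False in auto)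
    ultimately show ?thesis by simp
  qed
qed

lemma ci_det:
  assumes "\<And>\<omega>. \<omega> \<in> set_pmf P \<Longrightarrow> g \<omega> = \<phi> (h \<omega>)"
  shows "ci P f g h"
  unfolding ci_def
proof (intro allI)
  fix a b c
  show "prb P {\<omega>. f \<omega> = a \<and> g \<omega> = b \<and> h \<omega> = c} * prb P {\<omega>. h \<omega> = c} =
         prb P {\<omega>. f \<omega> = a \<and> h \<omega> = c} * prb P {\<omega>. g \<omega> = b \<and> h \<omega> = c}"
  proof (cases "b = \<phi> c")
    case True
    have 1: "prb P {\<omega>. f \<omega> = a \<and> g \<omega> = b \<and> h \<omega> = c} = prb P {\<omega>. f \<omega> = a \<and> h \<omega> = c}"
      by (rule prb_cong_supp) (use assms True in auto)
    have 2: "prb P {\<omega>. g \<omega> = b \<and> h \<omega> = c} = prb P {\<omega>. h \<omega> = c}"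
      by (rule prb_cong_supp) (use assms True in auto)
    show ?thesis unfolding 1 2 by simp
  next
    case False
    have 1: "prb P {\<omega>. f \<omega> = a \<and> g \<omega> = b \<and> h \<omega> = c} = prb P {}"
      by (rule prb_cong_supp) (use assms False in auto)
    have 2: "prb P {\<omega>. g \<omega> = b \<and> h \<omega> = c} = prb P {}"
      by (rule prb_cong_supp) (use assms False in auto)
    show ?thesis unfolding 1 2 by simp
  qed
qed

lemma prb_partition:
  "ennreal (prb P (E \<inter> {\<omega>. g \<omega> \<in> B})) =
     (\<integral>\<^sup>+b. ennreal (prb P (E \<inter> {\<omega>. g \<omega> = b})) \<partial>count_space (B \<inter> g ` set_pmf P))"
proof -
  let ?I = "B \<inter> g ` set_pmf P"
  let ?X = "\<lambda>b. E \<inter> {\<omega>. g \<omega> = b} \<inter> set_pmf P"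
  have c: "countable ?I" by (intro countable_Int2 countable_image) simp
  have d: "disjoint_family_on ?X ?I" unfolding disjoint_family_on_def by auto
  have u: "E \<inter> {\<omega>. g \<omega> \<in> B} \<inter> set_pmf P = \<Union>(?X ` ?I)" by auto
  have "ennreal (prb P (E \<inter> {\<omega>. g \<omega> \<in> B})) = emeasure (measure_pmf P) (E \<inter> {\<omega>. g \<omega> \<in> B} \<inter> set_pmf P)"
    by (simp add: measure_Int_set_pmf measure_pmf.emeasure_eq_measure)
  also have "\<dots> = (\<integral>\<^sup>+b. emeasure (measure_pmf P) (?X b) \<partial>count_space ?I)"
    unfolding u by (rule emeasure_UN_countable) (use c d in auto)
  also have "\<dots> = (\<integral>\<^sup>+b. ennreal (prb P (E \<inter> {\<omega>. g \<omega> = b})) \<partial>count_space ?I)"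
    by (simp add: emeasure_Int_set_pmf measure_pmf.emeasure_eq_measure measure_Int_set_pmf Int_assoc[symmetric])
  finally show ?thesis .
qed

lemma ci_fun2:
  assumes "ci P f g h"
  shows "ci P f (\<lambda>\<omega>. \<psi> (g \<omega>)) h"
  unfolding ci_def
proof (intro allI)
  fix a b' c
  let ?I = "\<psi> -` {b'} \<inter> g ` set_pmf P"
  have ci: "\<And>b. prb P {\<omega>. f \<omega> = a \<and> g \<omega> = b \<and> h \<omega> = c} * prb P {\<omega>. h \<omega> = c}
      = prb P {\<omega>. f \<omega> = a \<and> h \<omega> = c} * prb P {\<omega>. g \<omega> = b \<and> h \<omega> = c}"
    using assms unfolding ci_def by blast
  have L: "ennreal (prb P {\<omega>. f \<omega> = a \<and> \<psi> (g \<omega>) = b' \<and> h \<omega> = c}) =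
     (\<integral>\<^sup>+b. ennreal (prb P {\<omega>. f \<omega> = a \<and> g \<omega> = b \<and> h \<omega> = c}) \<partial>count_space ?I)"
  proof -
    have "{\<omega>. f \<omega> = a \<and> \<psi> (g \<omega>) = b' \<and> h \<omega> = c} = {\<omega>. f \<omega> = a \<and> h \<omega> = c} \<inter> {\<omega>. g \<omega> \<in> \<psi> -` {b'}}" by auto
    moreover have "\<And>b. {\<omega>. f \<omega> = a \<and> h \<omega> = c} \<inter> {\<omega>. g \<omega> = b} = {\<omega>. f \<omega> = a \<and> g \<omega> = b \<and> h \<omega> = c}" by auto
    ultimately show ?thesis using prb_partition[of P "{\<omega>. f \<omega> = a \<and> h \<omega> = c}" g "\<psi> -` {b'}"] by simp
  qed
  have R: "ennreal (prb P {\<omega>. \<psi> (g \<omega>) = b' \<and> h \<omega> = c}) =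
     (\<integral>\<^sup>+b. ennreal (prb P {\<omega>. g \<omega> = b \<and> h \<omega> = c}) \<partial>count_space ?I)"
  proof -
    have "{\<omega>. \<psi> (g \<omega>) = b' \<and> h \<omega> = c} = {\<omega>. h \<omega> = c} \<inter> {\<omega>. g \<omega> \<in> \<psi> -` {b'}}" by auto
    moreover have "\<And>b. {\<omega>. h \<omega> = c} \<inter> {\<omega>. g \<omega> = b} = {\<omega>. g \<omega> = b \<and> h \<omega> = c}" by auto
    ultimately show ?thesis using prb_partition[of P "{\<omega>. h \<omega> = c}" g "\<psi> -` {b'}"] by simp
  qed
  have "ennreal (prb P {\<omega>. f \<omega> = a \<and> \<psi> (g \<omega>) = b' \<and> h \<omega> = c} * prb P {\<omega>. h \<omega> = c})
      = ennreal (prb P {\<omega>. f \<omega> = a \<and> \<psi> (g \<omega>) = b' \<and> h \<omega> = c}) * ennreal (prb P {\<omega>. h \<omega> = c})"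
    by (simp add: ennreal_mult)
  also have "\<dots> = (\<integral>\<^sup>+b. ennreal (prb P {\<omega>. f \<omega> = a \<and> g \<omega> = b \<and> h \<omega> = c}) * ennreal (prb P {\<omega>. h \<omega> = c}) \<partial>count_space ?I)"
    unfolding L by (simp add: nn_integral_multc)
  also have "\<dots> = (\<integral>\<^sup>+b. ennreal (prb P {\<omega>. f \<omega> = a \<and> h \<omega> = c}) * ennreal (prb P {\<omega>. g \<omega> = b \<and> h \<omega> = c}) \<partial>count_space ?I)"
    by (rule nn_integral_cong) (simp add: ennreal_mult[symmetric] ci)
  also have "\<dots> = ennreal (prb P {\<omega>. f \<omega> = a \<and> h \<omega> = c}) * ennreal (prb P {\<omega>. \<psi> (g \<omega>) = b' \<and> h \<omega> = c})"
    unfolding R by (simp add: nn_integral_cmult)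
  also have "\<dots> = ennreal (prb P {\<omega>. f \<omega> = a \<and> h \<omega> = c} * prb P {\<omega>. \<psi> (g \<omega>) = b' \<and> h \<omega> = c})"
    by (simp add: ennreal_mult)
  finally show "prb P {\<omega>. f \<omega> = a \<and> \<psi> (g \<omega>) = b' \<and> h \<omega> = c} * prb P {\<omega>. h \<omega> = c} =
         prb P {\<omega>. f \<omega> = a \<and> h \<omega> = c} * prb P {\<omega>. \<psi> (g \<omega>) = b' \<and> h \<omega> = c}"
    by (subst (asm) ennreal_inj) auto
qed


lemma ci_contract:
  fixes f :: "'w \<Rightarrow> 'b" and g :: "'w \<Rightarrow> 'c" and k :: "'w \<Rightarrow> 'e" and h :: "'w \<Rightarrow> 'd"
  assumes H1: "ci P f g (\<lambda>\<omega>. (h \<omega>, k \<omega>))" and H2: "ci P f k h"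
  shows "ci P f (\<lambda>\<omega>. (g \<omega>, k \<omega>)) h"
  unfolding ci_def
proof (intro allI)
  fix a and bw :: "'c \<times> 'e" and z
  obtain b w where bw: "bw = (b, w)" by (cases bw) auto
  define A where "A = prb P {\<omega>. f \<omega> = a \<and> g \<omega> = b \<and> k \<omega> = w \<and> h \<omega> = z}"
  define Bw where "Bw = prb P {\<omega>. k \<omega> = w \<and> h \<omega> = z}"
  define C where "C = prb P {\<omega>. f \<omega> = a \<and> k \<omega> = w \<and> h \<omega> = z}"
  define D where "D = prb P {\<omega>. g \<omega> = b \<and> k \<omega> = w \<and> h \<omega> = z}"
  define Z where "Z = prb P {\<omega>. h \<omega> = z}"
  define E where "E = prb P {\<omega>. f \<omega> = a \<and> h \<omega> = z}"
  have e1: "A * Bw = C * D"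
  proof -
    have "prb P {\<omega>. f \<omega> = a \<and> g \<omega> = b \<and> (h \<omega>, k \<omega>) = (z, w)} * prb P {\<omega>. (h \<omega>, k \<omega>) = (z, w)} =
          prb P {\<omega>. f \<omega> = a \<and> (h \<omega>, k \<omega>) = (z, w)} * prb P {\<omega>. g \<omega> = b \<and> (h \<omega>, k \<omega>) = (z, w)}"
      using H1 unfolding ci_def by blast
    moreover have "{\<omega>. f \<omega> = a \<and> g \<omega> = b \<and> (h \<omega>, k \<omega>) = (z, w)} = {\<omega>. f \<omega> = a \<and> g \<omega> = b \<and> k \<omega> = w \<and> h \<omega> = z}" by auto
    moreover have "{\<omega>. (h \<omega>, k \<omega>) = (z, w)} = {\<omega>. k \<omega> = w \<and> h \<omega> = z}" by auto
    moreover have "{\<omega>. f \<omega> = a \<and> (h \<omega>, k \<omega>) = (z, w)} = {\<omega>. f \<omega> = a \<and> k \<omega> = w \<and> h \<omega> = z}" by auto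
    moreover have "{\<omega>. g \<omega> = b \<and> (h \<omega>, k \<omega>) = (z, w)} = {\<omega>. g \<omega> = b \<and> k \<omega> = w \<and> h \<omega> = z}" by auto
    ultimately show ?thesis unfolding A_def Bw_def C_def D_def by simp
  qed
  have e2: "C * Z = E * Bw"
    using H2 unfolding ci_def C_def Z_def E_def Bw_def by blast
  have g: "A * Z = E * D"
  proof (cases "Bw = 0")
    case True
    have "A \<le> Bw" unfolding A_def Bw_def by (rule prb_mono) auto
    moreover have "D \<le> Bw" unfolding D_def Bw_def by (rule prb_mono) auto
    moreover have "A \<ge> 0" "D \<ge> 0" unfolding A_def D_def by auto
    ultimately show ?thesis using True by simp
  next
    case False
    have "A * Z * Bw = E * D * Bw" using e1 e2
      by (metis mult.assoc mult.commute)
    then show ?thesis using False by simp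
  qed
  have s1: "{\<omega>. f \<omega> = a \<and> (g \<omega>, k \<omega>) = bw \<and> h \<omega> = z} = {\<omega>. f \<omega> = a \<and> g \<omega> = b \<and> k \<omega> = w \<and> h \<omega> = z}" using bw by auto
  have s2: "{\<omega>. (g \<omega>, k \<omega>) = bw \<and> h \<omega> = z} = {\<omega>. g \<omega> = b \<and> k \<omega> = w \<and> h \<omega> = z}" using bw by auto
  show "prb P {\<omega>. f \<omega> = a \<and> (g \<omega>, k \<omega>) = bw \<and> h \<omega> = z} * prb P {\<omega>. h \<omega> = z} =
         prb P {\<omega>. f \<omega> = a \<and> h \<omega> = z} * prb P {\<omega>. (g \<omega>, k \<omega>) = bw \<and> h \<omega> = z}"
    unfolding s1 s2 using g unfolding A_def Z_def E_def D_def .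
qed

lemma ci_weak_union:
  fixes f :: "'w \<Rightarrow> 'b" and g :: "'w \<Rightarrow> 'c" and k :: "'w \<Rightarrow> 'e" and h :: "'w \<Rightarrow> 'd"
  assumes H: "ci P f (\<lambda>\<omega>. (g \<omega>, k \<omega>)) h"
  shows "ci P f g (\<lambda>\<omega>. (h \<omega>, k \<omega>))"
  unfolding ci_def
proof (intro allI)
  fix a b and zw :: "'d \<times> 'e"
  obtain z w where zw: "zw = (z, w)" by (cases zw) auto
  have H2: "ci P f k h" using ci_fun2[OF H, of snd] by simp
  define A where "A = prb P {\<omega>. f \<omega> = a \<and> g \<omega> = b \<and> k \<omega> = w \<and> h \<omega> = z}"
  define Bw where "Bw = prb P {\<omega>. k \<omega> = w \<and> h \<omega> = z}"
  define C where "C = prb P {\<omega>. f \<omega> = a \<and> k \<omega> = w \<and> h \<omega> = z}"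
  define D where "D = prb P {\<omega>. g \<omega> = b \<and> k \<omega> = w \<and> h \<omega> = z}"
  define Z where "Z = prb P {\<omega>. h \<omega> = z}"
  define E where "E = prb P {\<omega>. f \<omega> = a \<and> h \<omega> = z}"
  have e1: "A * Z = E * D"
  proof -
    have "prb P {\<omega>. f \<omega> = a \<and> (g \<omega>, k \<omega>) = (b, w) \<and> h \<omega> = z} * prb P {\<omega>. h \<omega> = z} =
          prb P {\<omega>. f \<omega> = a \<and> h \<omega> = z} * prb P {\<omega>. (g \<omega>, k \<omega>) = (b, w) \<and> h \<omega> = z}"
      using H unfolding ci_def by blast
    moreover have "{\<omega>. f \<omega> = a \<and> (g \<omega>, k \<omega>) = (b, w) \<and> h \<omega> = z} = {\<omega>. f \<omega> = a \<and> g \<omega> = b \<and> k \<omega> = w \<and> h \<omega> = z}" by auto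
    moreover have "{\<omega>. (g \<omega>, k \<omega>) = (b, w) \<and> h \<omega> = z} = {\<omega>. g \<omega> = b \<and> k \<omega> = w \<and> h \<omega> = z}" by auto
    ultimately show ?thesis unfolding A_def Z_def E_def D_def by simp
  qed
  have e2: "C * Z = E * Bw"
    using H2 unfolding ci_def C_def Z_def E_def Bw_def by blast
  have g: "A * Bw = C * D"
  proof (cases "Z = 0")
    case True
    have "Bw \<le> Z" unfolding Bw_def Z_def by (rule prb_mono) auto
    moreover have "A \<le> Bw" unfolding A_def Bw_def by (rule prb_mono) auto
    moreover have "C \<le> Bw" unfolding C_def Bw_def by (rule prb_mono) auto
    moreover have "A \<ge> 0" "C \<ge> 0" "Bw \<ge> 0" unfolding A_def C_def Bw_def by auto
    ultimately show ?thesis using True by simp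
  next
    case False
    have "A * Bw * Z = C * D * Z" using e1 e2
      by (metis mult.assoc mult.commute)
    then show ?thesis using False by simp
  qed
  have s1: "{\<omega>. f \<omega> = a \<and> g \<omega> = b \<and> (h \<omega>, k \<omega>) = zw} = {\<omega>. f \<omega> = a \<and> g \<omega> = b \<and> k \<omega> = w \<and> h \<omega> = z}" using zw by auto
  have s2: "{\<omega>. (h \<omega>, k \<omega>) = zw} = {\<omega>. k \<omega> = w \<and> h \<omega> = z}" using zw by auto
  have s3: "{\<omega>. f \<omega> = a \<and> (h \<omega>, k \<omega>) = zw} = {\<omega>. f \<omega> = a \<and> k \<omega> = w \<and> h \<omega> = z}" using zw by auto
  have s4: "{\<omega>. g \<omega> = b \<and> (h \<omega>, k \<omega>) = zw} = {\<omega>. g \<omega> = b \<and> k \<omega> = w \<and> h \<omega> = z}" using zw by auto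
  show "prb P {\<omega>. f \<omega> = a \<and> g \<omega> = b \<and> (h \<omega>, k \<omega>) = zw} * prb P {\<omega>. (h \<omega>, k \<omega>) = zw} =
         prb P {\<omega>. f \<omega> = a \<and> (h \<omega>, k \<omega>) = zw} * prb P {\<omega>. g \<omega> = b \<and> (h \<omega>, k \<omega>) = zw}"
    unfolding s1 s2 s3 s4 using g unfolding A_def Bw_def C_def D_def .
qed

lemma restrict_eq_iff_ball: "c \<in> extensional W \<Longrightarrow> restrict \<omega> W = c \<longleftrightarrow> (\<forall>v\<in>W. \<omega> v = c v)"
  by (auto simp: fun_eq_iff restrict_def extensional_def)

lemma cond_indep_ci:
  fixes P :: "('v \<Rightarrow> 'a) pmf"
  shows "cond_indep P X Y W \<longleftrightarrow> ci P (\<lambda>\<omega>. \<omega> X) (\<lambda>\<omega>. \<omega> Y) (\<lambda>\<omega>. restrict \<omega> W)"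
proof
  assume H: "cond_indep P X Y W"
  show "ci P (\<lambda>\<omega>. \<omega> X) (\<lambda>\<omega>. \<omega> Y) (\<lambda>\<omega>. restrict \<omega> W)"
    unfolding ci_def
  proof (intro allI)
    fix a b c
    show "prb P {\<omega>. \<omega> X = a \<and> \<omega> Y = b \<and> restrict \<omega> W = c} * prb P {\<omega>. restrict \<omega> W = c} =
          prb P {\<omega>. \<omega> X = a \<and> restrict \<omega> W = c} * prb P {\<omega>. \<omega> Y = b \<and> restrict \<omega> W = c}"
    proof (cases "c \<in> extensional W")
      case True
      then show ?thesis using H unfolding cond_indep_def restrict_eq_iff_ball[OF True] by blast
    next
      case False
      have "\<And>\<omega>. restrict \<omega> W \<noteq> c" using False by auto
      then show ?thesis by simp
    qed
  qed
next
  assume H: "ci P (\<lambda>\<omega>. \<omega> X) (\<lambda>\<omega>. \<omega> Y) (\<lambda>\<omega>. restrict \<omega> W)"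
  show "cond_indep P X Y W" unfolding cond_indep_def
  proof (intro allI)
    fix x y :: 'a and w :: "'v \<Rightarrow> 'a"
    have e: "restrict w W \<in> extensional W" by simp
    show "prb P {\<omega>. \<omega> X = x \<and> \<omega> Y = y \<and> (\<forall>v\<in>W. \<omega> v = w v)} * prb P {\<omega>. \<forall>v\<in>W. \<omega> v = w v} =
          prb P {\<omega>. \<omega> X = x \<and> (\<forall>v\<in>W. \<omega> v = w v)} * prb P {\<omega>. \<omega> Y = y \<and> (\<forall>v\<in>W. \<omega> v = w v)}"
      using H[unfolded ci_def, rule_format, of x y "restrict w W"]
      unfolding restrict_eq_iff_ball[OF e] by simp
  qed
qed

lemma cond_indep_sym: "cond_indep P X Y W \<Longrightarrow> cond_indep P Y X W"
  unfolding cond_indep_ci by (rule ci_sym)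


definition open_at :: "'v mixed_graph \<Rightarrow> 'v set \<Rightarrow> 'v \<Rightarrow> 'v \<Rightarrow> 'v \<Rightarrow> bool" where
  "open_at G Z a v b \<longleftrightarrow> (arrow_into G a v \<and> arrow_into G b v \<longrightarrow> descendants G v \<inter> Z \<noteq> {}) \<and>
     (\<not> (arrow_into G a v \<and> arrow_into G b v) \<longrightarrow> v \<notin> Z)"

definition wok :: "('v \<Rightarrow> 'v \<Rightarrow> 'v \<Rightarrow> bool) \<Rightarrow> 'v list \<Rightarrow> bool" where
  "wok Q xs \<longleftrightarrow> (\<forall>k. 0 < k \<longrightarrow> Suc k < length xs \<longrightarrow> Q (xs ! (k - 1)) (xs ! k) (xs ! Suc k))"

definition walk :: "'v mixed_graph \<Rightarrow> 'v list \<Rightarrow> bool" where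
  "walk G xs \<longleftrightarrow> (\<forall>k. Suc k < length xs \<longrightarrow> adj G (xs ! k) (xs ! Suc k))"

lemma blocked_wok: "blocked G xs W \<longleftrightarrow> \<not> wok (open_at G W) xs"
  unfolding blocked_def wok_def is_collider_def open_at_def
  by (auto simp: Suc_lessI less_diff_conv)

lemma mg_path_walk: "mg_path G X Y xs \<longleftrightarrow> 2 \<le> length xs \<and> distinct xs \<and> hd xs = X \<and> last xs = Y \<and> walk G xs"
  unfolding mg_path_def walk_def successively_conv_nth by blast

lemma adj_sym: "adj G x y \<longleftrightarrow> adj G y x"
  unfolding adj_def by (auto simp: insert_commute)

lemma adj_not_arrow: "adj G a b \<Longrightarrow> \<not> arrow_into G b a \<Longrightarrow> (a, b) \<in> dir G"
  unfolding adj_def arrow_into_def by (auto simp: insert_commute)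

lemma dir_arrow: "(a, b) \<in> dir G \<Longrightarrow> arrow_into G a b"
  unfolding arrow_into_def by simp

lemma wok_mono:
  assumes "wok Q1 xs" "\<And>a v b. a \<in> set xs \<Longrightarrow> v \<in> set xs \<Longrightarrow> b \<in> set xs \<Longrightarrow> Q1 a v b \<Longrightarrow> Q2 a v b"
  shows "wok Q2 xs"
  using assms unfolding wok_def by (metis Suc_lessD less_imp_diff_less nth_mem)

lemma wok_rev: "wok Q (rev xs) \<longleftrightarrow> wok (\<lambda>a v b. Q b v a) xs"
proof -
  let ?n = "length xs"
  have "wok Q (rev xs) \<longleftrightarrow> (\<forall>k. 0 < k \<longrightarrow> Suc k < ?n \<longrightarrow> Q (xs ! (?n - k)) (xs ! (?n - 1 - k)) (xs ! (?n - 2 - k)))"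
    unfolding wok_def by (auto simp: rev_nth numeral_2_eq_2 Suc_diff_Suc)
  also have "\<dots> \<longleftrightarrow> (\<forall>k. 0 < k \<longrightarrow> Suc k < ?n \<longrightarrow> Q (xs ! Suc k) (xs ! k) (xs ! (k - 1)))"
  proof
    assume H: "\<forall>k. 0 < k \<longrightarrow> Suc k < ?n \<longrightarrow> Q (xs ! (?n - k)) (xs ! (?n - 1 - k)) (xs ! (?n - 2 - k))"
    show "\<forall>k. 0 < k \<longrightarrow> Suc k < ?n \<longrightarrow> Q (xs ! Suc k) (xs ! k) (xs ! (k - 1))"
    proof (intro allI impI)
      fix k assume k: "0 < k" "Suc k < ?n"
      have "Q (xs ! (?n - (?n - 1 - k))) (xs ! (?n - 1 - (?n - 1 - k))) (xs ! (?n - 2 - (?n - 1 - k)))"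
        by (rule H[rule_format]) (use k in auto)
      moreover have "?n - (?n - 1 - k) = Suc k" "?n - 1 - (?n - 1 - k) = k" "?n - 2 - (?n - 1 - k) = k - 1"
        using k by auto
      ultimately show "Q (xs ! Suc k) (xs ! k) (xs ! (k - 1))" by simp
    qed
  next
    assume H: "\<forall>k. 0 < k \<longrightarrow> Suc k < ?n \<longrightarrow> Q (xs ! Suc k) (xs ! k) (xs ! (k - 1))"
    show "\<forall>k. 0 < k \<longrightarrow> Suc k < ?n \<longrightarrow> Q (xs ! (?n - k)) (xs ! (?n - 1 - k)) (xs ! (?n - 2 - k))"
    proof (intro allI impI)
      fix k assume k: "0 < k" "Suc k < ?n"
      have "Q (xs ! Suc (?n - 1 - k)) (xs ! (?n - 1 - k)) (xs ! (?n - 1 - k - 1))"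
        by (rule H[rule_format]) (use k in auto)
      moreover have "Suc (?n - 1 - k) = ?n - k" "?n - 1 - k - 1 = ?n - 2 - k"
        using k by auto
      ultimately show "Q (xs ! (?n - k)) (xs ! (?n - 1 - k)) (xs ! (?n - 2 - k))" by simp
    qed
  qed
  finally show ?thesis unfolding wok_def .
qed

lemma walk_rev: "walk G (rev xs) \<longleftrightarrow> walk G xs"
  unfolding walk_def successively_conv_nth[symmetric] successively_rev
  by (simp add: adj_sym)

lemma open_at_sym: "open_at G Z a v b \<longleftrightarrow> open_at G Z b v a"
  unfolding open_at_def by auto

lemma m_separated_sym: "m_separated G X Y W \<Longrightarrow> m_separated G Y X W"
  unfolding m_separated_def
proof (intro allI impI)
  fix xs assume H: "\<forall>xs. mg_path G X Y xs \<longrightarrow> blocked G xs W" and p: "mg_path G Y X xs"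
  have "mg_path G X Y (rev xs)" using p unfolding mg_path_walk
    by (auto simp: walk_rev hd_rev last_rev)
  then have "blocked G (rev xs) W" using H by blast
  then show "blocked G xs W" unfolding blocked_wok wok_rev
    by (subst (asm) open_at_sym) simp
qed

lemma walk_concat:
  assumes "walk G xs" "walk G ys" "xs \<noteq> []" "ys \<noteq> []" "last xs = hd ys"
  shows "walk G (butlast xs @ ys)"
  unfolding walk_def
proof (intro allI impI)
  fix k assume k: "Suc k < length (butlast xs @ ys)"
  let ?m = "length xs - 1"
  have lb: "length (butlast xs) = ?m" by simp
  have lx: "xs ! ?m = hd ys" using assms by (simp add: last_conv_nth)
  show "adj G ((butlast xs @ ys) ! k) ((butlast xs @ ys) ! Suc k)"
  proof (cases "Suc k < ?m")
    case True
    then show ?thesis using assms(1) unfolding walk_def by (auto simp: nth_append nth_butlast)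
  next
    case False
    show ?thesis
    proof (cases "Suc k = ?m")
      case True
      then have "(butlast xs @ ys) ! k = xs ! k" "(butlast xs @ ys) ! Suc k = ys ! 0"
        by (auto simp: nth_append nth_butlast)
      moreover have "ys ! 0 = xs ! Suc k" using lx True assms by (simp add: hd_conv_nth)
      moreover have "Suc k < length xs" using True assms by auto
      ultimately show ?thesis using assms(1) unfolding walk_def by auto
    next
      case False2: False
      then have "(butlast xs @ ys) ! k = ys ! (k - ?m)" "(butlast xs @ ys) ! Suc k = ys ! Suc (k - ?m)"
        using False by (auto simp: nth_append Suc_diff_le)
      moreover have "Suc (k - ?m) < length ys" using k False False2 by auto
      ultimately show ?thesis using assms(2) unfolding walk_def by auto
    qed
  qed
qed

lemma wok_concat:
  assumes "wok Q xs" "wok Q ys" "xs \<noteq> []" "ys \<noteq> []" "last xs = hd ys"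
    and J: "2 \<le> length xs \<Longrightarrow> 2 \<le> length ys \<Longrightarrow> Q (xs ! (length xs - 2)) (hd ys) (ys ! 1)"
  shows "wok Q (butlast xs @ ys)"
  unfolding wok_def
proof (intro allI impI)
  fix k assume k0: "0 < k" and k: "Suc k < length (butlast xs @ ys)"
  let ?m = "length xs - 1"
  let ?zs = "butlast xs @ ys"
  have lx: "xs ! ?m = hd ys" using assms by (simp add: last_conv_nth)
  have hy: "hd ys = ys ! 0" using assms by (simp add: hd_conv_nth)
  have nz: "\<And>l. l < length ?zs \<Longrightarrow> ?zs ! l = (if l < ?m then xs ! l else ys ! (l - ?m))"
    by (auto simp: nth_append nth_butlast)
  have nz': "\<And>l. l < length ?zs \<Longrightarrow> l \<le> ?m \<Longrightarrow> ?zs ! l = xs ! l"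
    using nz lx hy by (metis diff_self_eq_0 le_neq_implies_less)
  show "Q (?zs ! (k - 1)) (?zs ! k) (?zs ! Suc k)"
  proof (cases "k < ?m")
    case True
    have "?zs ! (k - 1) = xs ! (k - 1)" "?zs ! k = xs ! k" "?zs ! Suc k = xs ! Suc k"
      using nz' k True by auto
    moreover have "Suc k < length xs" using True by auto
    ultimately show ?thesis using assms(1) k0 unfolding wok_def by auto
  next
    case False
    show ?thesis
    proof (cases "k = ?m")
      case True
      have "k - 1 = length xs - 2" using True by simp
      then have "?zs ! (k - 1) = xs ! (length xs - 2)" using nz' k True k0
        by (metis Suc_lessD diff_le_self less_imp_diff_less)
      moreover have "?zs ! k = hd ys" using nz' k True lx by auto
      moreover have "?zs ! Suc k = ys ! 1" using nz k True by auto
      moreover have "2 \<le> length xs" using True k0 by auto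
      moreover have "2 \<le> length ys"
      proof -
        have "length xs \<ge> 1" using assms(3) by (cases xs) auto
        then show ?thesis using k True by simp
      qed
      ultimately show ?thesis using J by simp
    next
      case False2: False
      then have m: "?m < k" using False by auto
      have "?zs ! (k - 1) = ys ! (k - ?m - 1)"
      proof (cases "k - 1 = ?m")
        case True
        have "k - 1 - ?m = 0" using True by simp
        moreover have "?zs ! (k - 1) = xs ! (k - 1)" using nz'[of "k - 1"] k True assms(4) by simp
        ultimately show ?thesis using True lx hy by simp
      next
        case False
        then have "\<not> k - 1 < ?m" using m by auto
        then show ?thesis using nz[of "k - 1"] k by simp
      qed
      moreover have "?zs ! k = ys ! (k - ?m)" using nz k m by auto
      moreover have "?zs ! Suc k = ys ! Suc (k - ?m)" using nz k m by (auto simp: Suc_diff_le)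
      moreover have "k - ?m - 1 = (k - ?m) - 1" by simp
      moreover have "0 < k - ?m" "Suc (k - ?m) < length ys" using m k by auto
      ultimately show ?thesis using assms(2) unfolding wok_def by metis
    qed
  qed
qed


lemma chain:
  assumes W: "walk G xs" and O: "wok (open_at G Z) xs" and ij: "i < j" "Suc j < length xs"
    and d: "(xs ! i, xs ! Suc i) \<in> dir G" and r: "arrow_into G (xs ! Suc j) (xs ! j)"
  shows "descendants G (xs ! i) \<inter> Z \<noteq> {}"
proof -
  let ?coll = "\<lambda>k. arrow_into G (xs ! (k - 1)) (xs ! k) \<and> arrow_into G (xs ! Suc k) (xs ! k)"
  have key: "Suc i \<le> m \<Longrightarrow> m \<le> j \<Longrightarrow> (\<exists>k. i < k \<and> k \<le> j \<and> ?coll k \<and> (xs ! i, xs ! k) \<in> (dir G)\<^sup>*) \<or>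
      ((xs ! i, xs ! m) \<in> (dir G)\<^sup>* \<and> arrow_into G (xs ! (m - 1)) (xs ! m))" for m
  proof (induction m)
    case 0 then show ?case by simp
  next
    case (Suc m)
    show ?case
    proof (cases "Suc m = Suc i")
      case True
      then show ?thesis using d by (auto intro: dir_arrow)
    next
      case False
      then have im: "Suc i \<le> m" using Suc.prems by auto
      from Suc.IH[OF im] Suc.prems
      consider "\<exists>k. i < k \<and> k \<le> j \<and> ?coll k \<and> (xs ! i, xs ! k) \<in> (dir G)\<^sup>*"
        | "(xs ! i, xs ! m) \<in> (dir G)\<^sup>*" "arrow_into G (xs ! (m - 1)) (xs ! m)" by auto
      then show ?thesis
      proof cases
        case 1 then show ?thesis by blast
      next
        case 2
        show ?thesis
        proof (cases "?coll m")
          case True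
          then show ?thesis using 2 im Suc.prems by auto
        next
          case False
          then have na: "\<not> arrow_into G (xs ! Suc m) (xs ! m)" using 2 by auto
          have "adj G (xs ! m) (xs ! Suc m)" using W Suc.prems ij unfolding walk_def by auto
          then have e: "(xs ! m, xs ! Suc m) \<in> dir G" using na by (rule adj_not_arrow)
          then have "(xs ! i, xs ! Suc m) \<in> (dir G)\<^sup>*" using 2 by auto
          then show ?thesis using e by (auto intro: dir_arrow)
        qed
      qed
    qed
  qed
  obtain k where k: "i < k" "k \<le> j" "?coll k" "(xs ! i, xs ! k) \<in> (dir G)\<^sup>*"
  proof -
    from key[of j] ij consider "\<exists>k. i < k \<and> k \<le> j \<and> ?coll k \<and> (xs ! i, xs ! k) \<in> (dir G)\<^sup>*"
      | "(xs ! i, xs ! j) \<in> (dir G)\<^sup>*" "arrow_into G (xs ! (j - 1)) (xs ! j)" by auto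
    then show ?thesis
    proof cases
      case 1 then show ?thesis using that by blast
    next
      case 2 then show ?thesis using that[of j] r ij by auto
    qed
  qed
  have "open_at G Z (xs ! (k - 1)) (xs ! k) (xs ! Suc k)"
    using O k ij unfolding wok_def by auto
  then have "descendants G (xs ! k) \<inter> Z \<noteq> {}" using k(3) unfolding open_at_def by auto
  moreover have "descendants G (xs ! k) \<subseteq> descendants G (xs ! i)"
    using k(4) unfolding descendants_def by (auto intro: rtrancl_trans)
  ultimately show ?thesis by blast
qed

lemma shortcut:
  assumes W: "walk G xs" and O: "wok (open_at G Z) xs" and ij: "i < j" "j < length xs"
    and eq: "xs ! i = xs ! j"
  shows "walk G (take i xs @ drop j xs) \<and> wok (open_at G Z) (take i xs @ drop j xs)"
proof -
  let ?ys = "take i xs @ drop j xs"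
  have len: "length ?ys = i + (length xs - j)" using ij by simp
  have nth: "\<And>k. k < length ?ys \<Longrightarrow> ?ys ! k = (if k < i then xs ! k else xs ! (k + j - i))"
    using ij by (auto simp: nth_append add.commute)
  have walk: "walk G ?ys"
    unfolding walk_def
  proof (intro allI impI)
    fix k assume k: "Suc k < length ?ys"
    consider "Suc k < i" | "Suc k = i" | "i \<le> k" by linarith
    then show "adj G (?ys ! k) (?ys ! Suc k)"
    proof cases
      case 1 then show ?thesis using nth k W ij unfolding walk_def by auto
    next
      case 2
      then have "?ys ! k = xs ! k" "?ys ! Suc k = xs ! Suc k" using nth k eq by auto
      then show ?thesis using W ij 2 unfolding walk_def by auto
    next
      case 3
      then have "?ys ! k = xs ! (k + j - i)" "?ys ! Suc k = xs ! Suc (k + j - i)" using nth k 3 by (auto simp: Suc_diff_le)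
      moreover have "Suc (k + j - i) < length xs" using k len 3 by auto
      ultimately show ?thesis using W unfolding walk_def by auto
    qed
  qed
  have wok: "wok (open_at G Z) ?ys"
    unfolding wok_def
  proof (intro allI impI)
    fix k assume k0: "0 < k" and k: "Suc k < length ?ys"
    consider "Suc k < i" | "Suc k = i" | "k = i" | "i < k" by linarith
    then show "open_at G Z (?ys ! (k - 1)) (?ys ! k) (?ys ! Suc k)"
    proof cases
      case 1
      then have "?ys ! (k - 1) = xs ! (k - 1)" "?ys ! k = xs ! k" "?ys ! Suc k = xs ! Suc k" using nth k by auto
      then show ?thesis using O k0 1 ij unfolding wok_def by auto
    next
      case 2
      then have "?ys ! (k - 1) = xs ! (k - 1)" "?ys ! k = xs ! k" "?ys ! Suc k = xs ! Suc k" using nth k eq by auto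
      then show ?thesis using O k0 2 ij unfolding wok_def by auto
    next
      case 3
      then have y: "?ys ! (k - 1) = xs ! (i - 1)" "?ys ! k = xs ! j" "?ys ! Suc k = xs ! Suc j" using nth k k0 by auto
      have sj: "Suc j < length xs" using k 3 len by auto
      have oi: "open_at G Z (xs ! (i - 1)) (xs ! i) (xs ! Suc i)" using O 3 k0 ij unfolding wok_def by auto
      have oj: "open_at G Z (xs ! (j - 1)) (xs ! j) (xs ! Suc j)" using O sj ij unfolding wok_def by auto
      have "open_at G Z (xs ! (i - 1)) (xs ! j) (xs ! Suc j)"
        unfolding open_at_def
      proof (intro conjI impI)
        assume c: "arrow_into G (xs ! (i - 1)) (xs ! j) \<and> arrow_into G (xs ! Suc j) (xs ! j)"
        show "descendants G (xs ! j) \<inter> Z \<noteq> {}"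
        proof (cases "arrow_into G (xs ! Suc i) (xs ! i)")
          case True
          then show ?thesis using oi c eq unfolding open_at_def by auto
        next
          case False
          have "adj G (xs ! i) (xs ! Suc i)" using W ij unfolding walk_def by auto
          then have "(xs ! i, xs ! Suc i) \<in> dir G" using False by (rule adj_not_arrow)
          from chain[OF W O ij(1) sj this] c eq show ?thesis by auto
        qed
      next
        assume c: "\<not> (arrow_into G (xs ! (i - 1)) (xs ! j) \<and> arrow_into G (xs ! Suc j) (xs ! j))"
        show "xs ! j \<notin> Z"
        proof
          assume z: "xs ! j \<in> Z"
          then have "arrow_into G (xs ! (i - 1)) (xs ! j)" using oi eq unfolding open_at_def by auto
          moreover have "arrow_into G (xs ! Suc j) (xs ! j)" using oj z unfolding open_at_def by auto
          ultimately show False using c by auto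
        qed
      qed
      then show ?thesis using y by simp
    next
      case 4
      then have "?ys ! (k - 1) = xs ! (k - 1 + j - i)"
        using nth k eq by (cases "k - 1 = i") auto
      moreover have "?ys ! k = xs ! (k + j - i)" "?ys ! Suc k = xs ! Suc (k + j - i)" using nth k 4 by (auto simp: Suc_diff_le)
      moreover have "k - 1 + j - i = (k + j - i) - 1" using 4 by auto
      moreover have "0 < k + j - i" "Suc (k + j - i) < length xs" using 4 k len ij by auto
      ultimately show ?thesis using O unfolding wok_def by metis
    qed
  qed
  show ?thesis using walk wok by blast
qed

lemma walk_to_path:
  "walk G xs \<Longrightarrow> wok (open_at G Z) xs \<Longrightarrow> xs \<noteq> [] \<Longrightarrow> hd xs \<noteq> last xs \<Longrightarrow>
     \<exists>ys. mg_path G (hd xs) (last xs) ys \<and> \<not> blocked G ys Z"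
proof (induction "length xs" arbitrary: xs rule: less_induct)
  case less
  show ?case
  proof (cases "distinct xs")
    case True
    have "length xs \<noteq> 1" using less.prems by (auto simp: length_Suc_conv)
    then have "2 \<le> length xs" using less.prems by (cases xs) (auto simp: Suc_le_eq)
    then show ?thesis using True less.prems unfolding mg_path_walk blocked_wok by blast
  next
    case False
    then obtain i j where ij: "i < j" "j < length xs" "xs ! i = xs ! j"
      unfolding distinct_conv_nth by (metis linorder_neqE_nat)
    let ?ys = "take i xs @ drop j xs"
    have s: "walk G ?ys \<and> wok (open_at G Z) ?ys" using shortcut[OF less.prems(1,2) ij] .
    have l: "length ?ys < length xs" using ij by auto
    have ne: "?ys \<noteq> []" using ij by auto
    have h: "hd ?ys = hd xs"
    proof (cases "i = 0")
      case True
      then show ?thesis using ij less.prems by (simp add: hd_drop_conv_nth hd_conv_nth)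
    next
      case False
      then show ?thesis using ij by (simp add: hd_append hd_take)
    qed
    have la: "last ?ys = last xs" using ij by simp
    from less.hyps[OF l] s ne h la less.prems show ?thesis by metis
  qed
qed


lemma restrict_insert_eq:
  "restrict \<omega> (insert t W) = restrict \<omega>' (insert t W) \<longleftrightarrow> \<omega> t = \<omega>' t \<and> restrict \<omega> W = restrict \<omega>' W"
  by (auto simp: fun_eq_iff restrict_def)

lemma restrict_eq_sub:
  "restrict \<omega> W = restrict \<omega>' W \<longleftrightarrow> (\<forall>v\<in>W. \<omega> v = \<omega>' v)"
  by (auto simp: fun_eq_iff restrict_def)

context
  fixes P :: "('v \<Rightarrow> 'a) pmf" and p t :: 'v and f :: "'a \<Rightarrow> 'a"
  assumes fd0: "\<forall>\<omega>\<in>set_pmf P. \<omega> t = f (\<omega> p)"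
begin

lemma fd: "\<omega> \<in> set_pmf P \<Longrightarrow> \<omega> t = f (\<omega> p)" using fd0 by blast

lemma CI_det: "p \<in> W \<Longrightarrow> cond_indep P t Y W"
  unfolding cond_indep_ci
  by (rule ci_sym, rule ci_det[where \<phi> = "\<lambda>c. f (c p)"]) (simp add: fd)

lemma CI_fun: "cond_indep P p Y W \<Longrightarrow> cond_indep P t Y W"
  unfolding cond_indep_ci
  apply (drule ci_sym)
  apply (drule ci_fun2[where \<psi> = f])
  apply (drule ci_sym)
  apply (erule ci_cong)
  by (simp_all add: fd)

lemma CI_3a: "p \<in> W \<Longrightarrow> cond_indep P X Y W \<Longrightarrow> cond_indep P X Y (insert t W)"
  unfolding cond_indep_ci
  apply (erule ci_cond_iso)
  apply (simp add: restrict_insert_eq fd)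
  by (metis restrict_eq_sub)

lemma CI_3b: "cond_indep P p Y W \<Longrightarrow> cond_indep P p Y (insert t W)"
  unfolding cond_indep_ci
  apply (drule ci_sym)
  apply (drule ci_fun2[where \<psi> = "\<lambda>x. (x, f x)"])
  apply (drule ci_weak_union)
  apply (drule ci_sym)
  apply (erule ci_cond_iso)
  by (auto simp: restrict_insert_eq fd)

lemma CI_3c: "cond_indep P X Y (insert p W) \<Longrightarrow> cond_indep P X p W \<Longrightarrow> cond_indep P X Y (insert t W)"
  unfolding cond_indep_ci
proof -
  assume H1: "ci P (\<lambda>\<omega>. \<omega> X) (\<lambda>\<omega>. \<omega> Y) (\<lambda>\<omega>. restrict \<omega> (insert p W))"
    and H2: "ci P (\<lambda>\<omega>. \<omega> X) (\<lambda>\<omega>. \<omega> p) (\<lambda>\<omega>. restrict \<omega> W)"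
  have a: "ci P (\<lambda>\<omega>. \<omega> X) (\<lambda>\<omega>. \<omega> Y) (\<lambda>\<omega>. (restrict \<omega> W, \<omega> p))"
    by (rule ci_cond_iso[OF H1]) (auto simp: restrict_insert_eq)
  have b: "ci P (\<lambda>\<omega>. \<omega> X) (\<lambda>\<omega>. (\<omega> Y, \<omega> p)) (\<lambda>\<omega>. restrict \<omega> W)"
    by (rule ci_contract[OF a H2])
  have c: "ci P (\<lambda>\<omega>. \<omega> X) (\<lambda>\<omega>. (\<omega> Y, f (\<omega> p))) (\<lambda>\<omega>. restrict \<omega> W)"
    using ci_fun2[OF b, where \<psi> = "\<lambda>(y, q). (y, f q)"] by simp
  have d: "ci P (\<lambda>\<omega>. \<omega> X) (\<lambda>\<omega>. \<omega> Y) (\<lambda>\<omega>. (restrict \<omega> W, f (\<omega> p)))"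
    by (rule ci_weak_union[OF c])
  show "ci P (\<lambda>\<omega>. \<omega> X) (\<lambda>\<omega>. \<omega> Y) (\<lambda>\<omega>. restrict \<omega> (insert t W))"
    by (rule ci_cond_iso[OF d]) (auto simp: restrict_insert_eq fd)
qed

end


definition ext :: "'v mixed_graph \<Rightarrow> 'v \<Rightarrow> 'v \<Rightarrow> 'v mixed_graph" where
  "ext G p t = (insert (p, t) (dir G), bid G)"

lemma dir_ext [simp]: "dir (ext G p t) = insert (p, t) (dir G)" and bid_ext [simp]: "bid (ext G p t) = bid G"
  unfolding ext_def dir_def bid_def by simp_all

lemma adj_MAG: "is_MAG U G \<Longrightarrow> adj G x y \<Longrightarrow> x \<in> U \<and> y \<in> U"
  unfolding is_MAG_def adj_def by (auto simp: doubleton_eq_iff)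

lemma walk_set_U: "is_MAG U G \<Longrightarrow> walk G xs \<Longrightarrow> 2 \<le> length xs \<Longrightarrow> set xs \<subseteq> U"
proof
  fix x assume M: "is_MAG U G" and w: "walk G xs" and l: "2 \<le> length xs" and x: "x \<in> set xs"
  then obtain k where k: "k < length xs" "xs ! k = x" by (auto simp: in_set_conv_nth)
  show "x \<in> U"
  proof (cases "Suc k < length xs")
    case True
    then show ?thesis using w k adj_MAG[OF M] unfolding walk_def by blast
  next
    case False
    then have "Suc (k - 1) < length xs" "xs ! Suc (k - 1) = x" using k l by auto
    then show ?thesis using w k adj_MAG[OF M] unfolding walk_def by metis
  qed
qed

context
  fixes G :: "'v mixed_graph" and U :: "'v set" and p t :: 'v
  assumes M: "is_MAG U G" and tU: "t \<notin> U" and pU: "p \<in> U"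
begin

lemma pt: "p \<noteq> t" using tU pU by auto

lemma bid_U: "{x, y} \<in> bid G \<Longrightarrow> x \<in> U \<and> y \<in> U"
  using M unfolding is_MAG_def by (auto simp: doubleton_eq_iff)

lemma dir_U: "(x, y) \<in> dir G \<Longrightarrow> x \<in> U \<and> y \<in> U"
  using M unfolding is_MAG_def by auto

lemma adj_ext: "adj (ext G p t) x y \<longleftrightarrow> adj G x y \<or> (x = p \<and> y = t) \<or> (x = t \<and> y = p)"
  unfolding adj_def by auto

lemma arrow_ext: "arrow_into (ext G p t) a b \<longleftrightarrow> arrow_into G a b \<or> (a = p \<and> b = t)"
  unfolding arrow_into_def by auto

lemma arrow_ext_U: "b \<in> U \<Longrightarrow> arrow_into (ext G p t) a b \<longleftrightarrow> arrow_into G a b"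
  unfolding arrow_ext using tU by auto

lemma not_arrow_tp: "\<not> arrow_into (ext G p t) t p"
  unfolding arrow_ext arrow_into_def using pt tU dir_U bid_U by (auto simp: insert_commute)

lemma adj_t: "adj (ext G p t) t z \<Longrightarrow> z = p"
  unfolding adj_ext using adj_MAG[OF M] tU by auto

lemma adj_t': "adj (ext G p t) z t \<Longrightarrow> z = p"
  using adj_t adj_sym by metis

lemma noout_t: "(t, y) \<notin> dir G"
  using dir_U tU by auto

lemma rtr_t: "(t, y) \<in> (dir G)\<^sup>* \<Longrightarrow> y = t"
  by (erule converse_rtranclE) (auto simp: noout_t)

lemma desc_ext_sub: "descendants G v \<subseteq> descendants (ext G p t) v"
  unfolding descendants_def by (auto intro: rtrancl_mono[THEN subsetD])

lemma desc_ext_p: "p \<in> descendants G v \<Longrightarrow> t \<in> descendants (ext G p t) v"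
  unfolding descendants_def dir_ext by (auto simp: rtrancl_insert)

lemma desc_ext_sup: "descendants (ext G p t) v \<subseteq> insert t (descendants G v)"
  unfolding descendants_def dir_ext rtrancl_insert by (auto dest: rtr_t)

lemma path_lift: "mg_path G x y xs \<Longrightarrow> mg_path (ext G p t) x y xs"
  unfolding mg_path_walk walk_def adj_ext by auto

lemma open_lift:
  assumes "a \<in> U" "v \<in> U" "b \<in> U" "open_at G Z a v b"
    and "descendants G v \<inter> Z \<noteq> {} \<Longrightarrow> descendants (ext G p t) v \<inter> Z' \<noteq> {}"
    and "v \<notin> Z \<Longrightarrow> v \<notin> Z'"
  shows "open_at (ext G p t) Z' a v b"
  using assms unfolding open_at_def by (simp add: arrow_ext_U)

lemma msep_ext_to_G:
  assumes S: "m_separated (ext G p t) X Y Z'"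
    and D: "\<And>v. v \<in> U \<Longrightarrow> descendants G v \<inter> Z \<noteq> {} \<Longrightarrow> descendants (ext G p t) v \<inter> Z' \<noteq> {}"
    and N: "\<And>v. v \<in> U \<Longrightarrow> v \<notin> Z \<Longrightarrow> v \<notin> Z'"
  shows "m_separated G X Y Z"
  unfolding m_separated_def
proof (intro allI impI)
  fix xs assume pa: "mg_path G X Y xs"
  have sU: "set xs \<subseteq> U" using pa walk_set_U[OF M] unfolding mg_path_walk by blast
  show "blocked G xs Z"
  proof (rule ccontr)
    assume "\<not> blocked G xs Z"
    then have "wok (open_at G Z) xs" unfolding blocked_wok by simp
    then have "wok (open_at (ext G p t) Z') xs"
      by (rule wok_mono) (use sU D N in \<open>auto intro!: open_lift\<close>)
    then have "\<not> blocked (ext G p t) xs Z'" unfolding blocked_wok by simp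
    moreover have "blocked (ext G p t) xs Z'" using S path_lift[OF pa] unfolding m_separated_def by blast
    ultimately show False by simp
  qed
qed

lemma t_notin_path:
  assumes w: "walk (ext G p t) xs" and d: "distinct xs" and h: "hd xs \<noteq> t" and l: "last xs \<noteq> t" and ne: "xs \<noteq> []"
  shows "t \<notin> set xs"
proof
  assume "t \<in> set xs"
  then obtain k where k: "k < length xs" "xs ! k = t" by (auto simp: in_set_conv_nth)
  have k0: "k \<noteq> 0"
  proof
    assume "k = 0" then show False using h k ne by (simp add: hd_conv_nth)
  qed
  have k1: "Suc k < length xs" using l k ne by (metis Suc_lessI diff_Suc_1 last_conv_nth)
  have sk: "Suc (k - 1) = k" using k0 by simp
  have "adj (ext G p t) (xs ! (k - 1)) (xs ! Suc (k - 1))" using w[unfolded walk_def, rule_format, of "k - 1"] k sk by simp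
  then have a: "xs ! (k - 1) = p" using adj_t' k k0 by auto
  have "adj (ext G p t) (xs ! k) (xs ! Suc k)" using w k1 unfolding walk_def by auto
  then have b: "xs ! Suc k = p" using adj_t k by auto
  have "k - 1 \<noteq> Suc k" by auto
  then show False using a b d k1 unfolding distinct_conv_nth by (metis less_imp_diff_less Suc_lessD)
qed

lemma walk_ext_G: "walk (ext G p t) xs \<Longrightarrow> t \<notin> set xs \<Longrightarrow> walk G xs"
  unfolding walk_def adj_ext by (metis Suc_lessD nth_mem)

lemma msep_G_to_ext:
  assumes S: "m_separated G X Y W" and WU: "W \<subseteq> U" and XU: "X \<in> U" "Y \<in> U"
  shows "m_separated (ext G p t) X Y W"
  unfolding m_separated_def
proof (intro allI impI)
  fix xs assume pa: "mg_path (ext G p t) X Y xs"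
  then have w: "walk (ext G p t) xs" and d: "distinct xs" and hl: "hd xs = X" "last xs = Y" and l2: "2 \<le> length xs"
    unfolding mg_path_walk by auto
  have ne: "xs \<noteq> []" using l2 by auto
  have tn: "t \<notin> set xs" using t_notin_path[OF w d] hl XU tU ne by auto
  have pG: "mg_path G X Y xs" using walk_ext_G[OF w tn] d hl l2 unfolding mg_path_walk by auto
  have sU: "set xs \<subseteq> U" using pG walk_set_U[OF M] unfolding mg_path_walk by blast
  show "blocked (ext G p t) xs W"
  proof (rule ccontr)
    assume "\<not> blocked (ext G p t) xs W"
    then have "wok (open_at (ext G p t) W) xs" unfolding blocked_wok by simp
    then have "wok (open_at G W) xs"
    proof (rule wok_mono)
      fix a v b assume "a \<in> set xs" "v \<in> set xs" "b \<in> set xs" and o: "open_at (ext G p t) W a v b"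
      then have U: "a \<in> U" "v \<in> U" "b \<in> U" using sU by auto
      have "descendants (ext G p t) v \<inter> W \<noteq> {} \<Longrightarrow> descendants G v \<inter> W \<noteq> {}"
        using desc_ext_sup[of v] WU tU by blast
      then show "open_at G W a v b" using o U unfolding open_at_def by (simp add: arrow_ext_U)
    qed
    then have "\<not> blocked G xs W" unfolding blocked_wok by simp
    then show False using S pG unfolding m_separated_def by blast
  qed
qed

lemma msep_t:
  assumes yU: "y \<in> U" and yp: "y \<noteq> p"
  shows "m_separated (ext G p t) t y {p}"
  unfolding m_separated_def
proof (intro allI impI)
  fix xs assume pa: "mg_path (ext G p t) t y xs"
  then have w: "walk (ext G p t) xs" and d: "distinct xs" and hl: "hd xs = t" "last xs = y" and l2: "2 \<le> length xs"
    unfolding mg_path_walk by auto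
  have x0: "xs ! 0 = t" using hl l2 by (cases xs) auto
  have "adj (ext G p t) (xs ! 0) (xs ! Suc 0)" using w l2 unfolding walk_def by auto
  then have x1: "xs ! 1 = p" using adj_t x0 by auto
  have l3: "2 < length xs"
  proof (rule ccontr)
    assume "\<not> 2 < length xs"
    then have "length xs = 2" using l2 by auto
    moreover have "xs \<noteq> []" using l2 by auto
    ultimately have "last xs = xs ! 1" by (simp add: last_conv_nth)
    then show False using x1 hl yp by simp
  qed
  have "\<not> open_at (ext G p t) {p} (xs ! 0) (xs ! 1) (xs ! 2)"
    unfolding open_at_def x0 x1 using not_arrow_tp by auto
  then show "blocked (ext G p t) xs {p}" unfolding blocked_wok wok_def using l3
    by (metis One_nat_def Suc_1 diff_Suc_1 zero_less_one)
qed

lemma MAG_ext: "is_MAG (insert t U) (ext G p t)"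
proof -
  note MM = M[unfolded is_MAG_def]
  note m1 = MM[THEN conjunct1]
  note m2 = MM[THEN conjunct2, THEN conjunct1]
  note m3 = MM[THEN conjunct2, THEN conjunct2, THEN conjunct1]
  note m4 = MM[THEN conjunct2, THEN conjunct2, THEN conjunct2, THEN conjunct1]
  note m5 = MM[THEN conjunct2, THEN conjunct2, THEN conjunct2, THEN conjunct2, THEN conjunct1]
  note m6 = MM[THEN conjunct2, THEN conjunct2, THEN conjunct2, THEN conjunct2, THEN conjunct2, THEN conjunct1]
  note m7 = MM[THEN conjunct2, THEN conjunct2, THEN conjunct2, THEN conjunct2, THEN conjunct2, THEN conjunct2]
  note m = m1 m2 m3 m4 m5 m6 m7
  have 1: "dir (ext G p t) \<subseteq> insert t U \<times> insert t U" using m(1) pU by auto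
  have 2: "\<forall>e\<in>bid (ext G p t). \<exists>x y. e = {x, y} \<and> x \<noteq> y \<and> x \<in> insert t U \<and> y \<in> insert t U"
  proof
    fix e assume "e \<in> bid (ext G p t)"
    then obtain x y where "e = {x, y} \<and> x \<noteq> y \<and> x \<in> U \<and> y \<in> U" using m2 by auto
    then show "\<exists>x y. e = {x, y} \<and> x \<noteq> y \<and> x \<in> insert t U \<and> y \<in> insert t U" by blast
  qed
  have 3: "\<forall>x. (x, x) \<notin> dir (ext G p t)" using m(3) pt by auto
  have 4: "\<forall>x y. (x, y) \<in> dir (ext G p t) \<longrightarrow> (y, x) \<notin> dir (ext G p t) \<and> {x, y} \<notin> bid (ext G p t)"
  proof (intro allI impI)
    fix x y assume xy: "(x, y) \<in> dir (ext G p t)"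
    show "(y, x) \<notin> dir (ext G p t) \<and> {x, y} \<notin> bid (ext G p t)"
    proof (cases "(x, y) = (p, t)")
      case True
      have "(t, p) \<notin> dir G" by (rule noout_t)
      moreover have "{p, t} \<notin> bid G" using bid_U tU by blast
      ultimately show ?thesis using True pt by auto
    next
      case False
      then have d: "(x, y) \<in> dir G" using xy by auto
      then have "x \<in> U" using dir_U by blast
      then have "(y, x) \<noteq> (p, t)" using tU by auto
      then show ?thesis using m(4) d by auto
    qed
  qed
  have "(t, p) \<notin> (dir G)\<^sup>*" using rtr_t pt by blast
  then have 5: "acyclic (dir (ext G p t))" using m(5) by simp
  have 6: "\<forall>x z. {x, z} \<in> bid (ext G p t) \<longrightarrow> (x, z) \<notin> (dir (ext G p t))\<^sup>+"
  proof (intro allI impI)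
    fix x z assume b: "{x, z} \<in> bid (ext G p t)"
    then have "z \<in> U" using bid_U by auto
    then have "z \<noteq> t" using tU by auto
    have nb: "(x, z) \<notin> (dir G)\<^sup>+" using m6 b by simp
    show "(x, z) \<notin> (dir (ext G p t))\<^sup>+"
    proof
      assume "(x, z) \<in> (dir (ext G p t))\<^sup>+"
      then have "(x, z) \<in> (dir G)\<^sup>+ \<or> (t, z) \<in> (dir G)\<^sup>*" unfolding dir_ext trancl_insert by blast
      then show False using nb rtr_t \<open>z \<noteq> t\<close> by blast
    qed
  qed
  have 7: "\<forall>x\<in>insert t U. \<forall>y\<in>insert t U. x \<noteq> y \<and> \<not> adj (ext G p t) x y \<longrightarrow>
      (\<exists>W \<subseteq> insert t U - {x, y}. m_separated (ext G p t) x y W)"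
  proof (intro ballI impI)
    fix x y assume x: "x \<in> insert t U" and y: "y \<in> insert t U" and na: "x \<noteq> y \<and> \<not> adj (ext G p t) x y"
    consider "x \<in> U" "y \<in> U" | "x = t" "y \<in> U" | "x \<in> U" "y = t" using x y na by auto
    then show "\<exists>W \<subseteq> insert t U - {x, y}. m_separated (ext G p t) x y W"
    proof cases
      case 1
      then have "\<not> adj G x y" using na unfolding adj_ext by auto
      then obtain W where W: "W \<subseteq> U - {x, y}" "m_separated G x y W" using m(7) 1 na by blast
      then have "m_separated (ext G p t) x y W" using msep_G_to_ext[OF W(2)] 1 by auto
      then show ?thesis using W by blast
    next
      case 2
      then have "y \<noteq> p" using na unfolding adj_ext by auto
      moreover have "{p} \<subseteq> insert t U - {t, y}" using 2 pU pt \<open>y \<noteq> p\<close> by auto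
      ultimately show ?thesis using msep_t[of y] 2 by blast
    next
      case 3
      then have "x \<noteq> p" using na unfolding adj_ext by auto
      then have "m_separated (ext G p t) t x {p}" using msep_t[of x] 3 by blast
      then have "m_separated (ext G p t) x t {p}" by (rule m_separated_sym)
      moreover have "{p} \<subseteq> insert t U - {x, t}" using 3 pU pt \<open>x \<noteq> p\<close> by auto
      ultimately show ?thesis using 3 by blast
    qed
  qed
  show ?thesis unfolding is_MAG_def
    by (rule conjI[OF 1 conjI[OF 2 conjI[OF 3 conjI[OF 4 conjI[OF 5 conjI[OF 6 7]]]]]])
qed

lemma skeleton_ext: "skeleton (ext G p t) = insert {p, t} (skeleton G)"
proof
  show "skeleton (ext G p t) \<subseteq> insert {p, t} (skeleton G)"
    unfolding skeleton_def adj_ext by (auto simp: insert_commute)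
  show "insert {p, t} (skeleton G) \<subseteq> skeleton (ext G p t)"
    unfolding skeleton_def adj_ext by blast
qed

end


context
  fixes G :: "'v mixed_graph" and U :: "'v set" and p t :: 'v
    and P :: "('v \<Rightarrow> 'a) pmf" and f :: "'a \<Rightarrow> 'a"
  assumes M: "is_MAG U G" and tU: "t \<notin> U" and pU: "p \<in> U"
    and fd0: "\<forall>\<omega>\<in>set_pmf P. \<omega> t = f (\<omega> p)"
    and GM: "GMP P U G"
begin

lemma GM': "X \<in> U \<Longrightarrow> Y \<in> U \<Longrightarrow> X \<noteq> Y \<Longrightarrow> W \<subseteq> U - {X, Y} \<Longrightarrow> m_separated G X Y W \<Longrightarrow> cond_indep P X Y W"
  using GM unfolding GMP_def by blast

lemma walk_lift: "walk G xs \<Longrightarrow> walk (ext G p t) xs"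
  unfolding walk_def adj_ext[OF M tU pU] by auto

lemma wok_lift:
  assumes "wok (open_at G Z) xs" "set xs \<subseteq> U" "Z \<subseteq> Z'" "\<And>v. v \<in> U \<Longrightarrow> v \<notin> Z \<Longrightarrow> v \<notin> Z'"
  shows "wok (open_at (ext G p t) Z') xs"
  using assms(1)
proof (rule wok_mono)
  fix a v b assume H: "a \<in> set xs" "v \<in> set xs" "b \<in> set xs" "open_at G Z a v b"
  show "open_at (ext G p t) Z' a v b"
    apply (rule open_lift[OF M tU pU, where Z=Z])
    using H assms(2-4) desc_ext_sub[OF M tU pU, of v] by auto
qed

lemma case_t:
  assumes YU: "Y \<in> U" and WU: "W \<subseteq> U - {Y}" and S: "m_separated (ext G p t) t Y W"
  shows "cond_indep P t Y W"
proof (cases "p \<in> W")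
  case True
  then show ?thesis by (rule CI_det[where P=P and p=p and t=t and f=f, OF fd0])
next
  case pW: False
  show ?thesis
  proof (cases "p = Y")
    case True
    have "mg_path (ext G p t) t Y [t, p]"
      unfolding mg_path_walk walk_def using True pt[OF M tU pU] adj_ext[OF M tU pU] by auto
    moreover have "\<not> blocked (ext G p t) [t, p] W" unfolding blocked_wok wok_def by auto
    ultimately show ?thesis using S unfolding m_separated_def by blast
  next
    case pY: False
    have "m_separated G p Y W"
      unfolding m_separated_def
    proof (intro allI impI)
      fix xs assume pa: "mg_path G p Y xs"
      then have w: "walk G xs" and d: "distinct xs" and h: "hd xs = p" and l: "last xs = Y" and l2: "2 \<le> length xs"
        unfolding mg_path_walk by auto
      have sU: "set xs \<subseteq> U" using walk_set_U[OF M w l2] .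
      show "blocked G xs W"
      proof (rule ccontr)
        assume "\<not> blocked G xs W"
        then have o: "wok (open_at G W) xs" unfolding blocked_wok by simp
        have o': "wok (open_at (ext G p t) W) xs" by (rule wok_lift[OF o sU]) auto
        have ne: "xs \<noteq> []" using l2 by auto
        have e: "butlast [t, p] @ xs = t # xs" by simp
        have wt: "walk (ext G p t) [t, p]" unfolding walk_def using adj_ext[OF M tU pU] by auto
        have W2: "walk (ext G p t) (t # xs)"
          using walk_concat[OF wt walk_lift[OF w]] ne h e by simp
        have J: "open_at (ext G p t) W t p (xs ! 1)"
          unfolding open_at_def using not_arrow_tp[OF M tU pU] pW by auto
        have O2: "wok (open_at (ext G p t) W) (t # xs)"
          using wok_concat[OF _ o', of "[t, p]"] ne h J e unfolding wok_def by auto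
        have "mg_path (ext G p t) t Y (t # xs)"
          unfolding mg_path_walk using W2 d sU tU l l2 ne by auto
        moreover have "\<not> blocked (ext G p t) (t # xs) W" using O2 unfolding blocked_wok by simp
        ultimately show False using S unfolding m_separated_def by blast
      qed
    qed
    then have "cond_indep P p Y W" using GM' pU YU pY WU pW by auto
    then show ?thesis by (rule CI_fun[where P=P and p=p and t=t and f=f, OF fd0])
  qed
qed

lemma case_U:
  assumes XU: "X \<in> U" and YU: "Y \<in> U" and XY: "X \<noteq> Y" and WU: "W \<subseteq> insert t U - {X, Y}"
    and S: "m_separated (ext G p t) X Y W"
  shows "cond_indep P X Y W"
proof (cases "t \<in> W")
  case False
  then have WU': "W \<subseteq> U - {X, Y}" using WU by auto
  have "m_separated G X Y W"
  proof (rule msep_ext_to_G[OF M tU pU S])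
    fix v assume "descendants G v \<inter> W \<noteq> {}"
    then show "descendants (ext G p t) v \<inter> W \<noteq> {}" using desc_ext_sub[OF M tU pU, of v] by blast
  qed
  then show ?thesis using GM' XU YU XY WU' by blast
next
  case True
  define W0 where "W0 = W - {t}"
  have WW: "W = insert t W0" using True W0_def by auto
  have W0U: "W0 \<subseteq> U - {X, Y}" using WU W0_def by auto
  have N: "\<And>v. v \<in> U \<Longrightarrow> v \<notin> W0 \<Longrightarrow> v \<notin> W" using WW tU by auto
  have sep0: "m_separated G X Y W0"
  proof (rule msep_ext_to_G[OF M tU pU S])
    fix v assume "descendants G v \<inter> W0 \<noteq> {}"
    then show "descendants (ext G p t) v \<inter> W \<noteq> {}" using desc_ext_sub[OF M tU pU, of v] WW by blast
  next
    fix v assume "v \<in> U" "v \<notin> W0"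
    then show "v \<notin> W" using N by blast
  qed
  consider "p \<in> W0" | "p = X" | "p = Y" | "p \<notin> W0" "p \<noteq> X" "p \<noteq> Y" by blast
  then show ?thesis
  proof cases
    case 1
    then have "cond_indep P X Y W0" using sep0 GM' XU YU XY W0U by blast
    then show ?thesis unfolding WW by (rule CI_3a[where P=P and p=p and t=t and f=f, OF fd0 1])
  next
    case 2
    then have "cond_indep P p Y W0" using sep0 GM' XU YU XY W0U by blast
    then have "cond_indep P p Y (insert t W0)" by (rule CI_3b[where P=P and p=p and t=t and f=f, OF fd0])
    then show ?thesis unfolding WW using 2 by simp
  next
    case 3
    have "cond_indep P X Y W0" using sep0 GM' XU YU XY W0U by blast
    then have "cond_indep P Y X W0" by (rule cond_indep_sym)
    then have "cond_indep P p X W0" using 3 by simp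
    then have "cond_indep P p X (insert t W0)" by (rule CI_3b[where P=P and p=p and t=t and f=f, OF fd0])
    then have "cond_indep P X p (insert t W0)" by (rule cond_indep_sym)
    then show ?thesis unfolding WW using 3 by simp
  next
    case 4
    have pW0U: "insert p W0 \<subseteq> U - {X, Y}" using W0U 4 pU by auto
    have sepi: "m_separated G X Y (insert p W0)"
    proof (rule msep_ext_to_G[OF M tU pU S])
      fix v assume a: "descendants G v \<inter> insert p W0 \<noteq> {}"
      show "descendants (ext G p t) v \<inter> W \<noteq> {}"
      proof (cases "p \<in> descendants G v")
        case True
        then show ?thesis using desc_ext_p[OF M tU pU, of v] WW by blast
      next
        case False
        then show ?thesis using a desc_ext_sub[OF M tU pU, of v] WW by blast
      qed
    next
      fix v assume "v \<in> U" "v \<notin> insert p W0"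
      then show "v \<notin> W" using N by blast
    qed
    then have ci1: "cond_indep P X Y (insert p W0)" using GM' XU YU XY pW0U by blast
    have W0pX: "W0 \<subseteq> U - {X, p}" "W0 \<subseteq> U - {Y, p}" using W0U 4 by auto
    have sepii: "m_separated G X p W0 \<or> m_separated G Y p W0"
    proof (rule ccontr)
      assume "\<not> (m_separated G X p W0 \<or> m_separated G Y p W0)"
      then obtain xs ys where
        px: "mg_path G X p xs" "\<not> blocked G xs W0" and
        py0: "mg_path G Y p ys" "\<not> blocked G ys W0"
        unfolding m_separated_def by blast
      let ?zs = "rev ys"
      have py: "mg_path G p Y ?zs" using py0(1) unfolding mg_path_walk by (auto simp: walk_rev hd_rev last_rev)
      have pyo: "\<not> blocked G ?zs W0" using py0(2) unfolding blocked_wok wok_rev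
        by (subst open_at_sym) simp
      have wx: "walk G xs" and lx: "2 \<le> length xs" and hx: "hd xs = X" and lax: "last xs = p"
        using px(1) unfolding mg_path_walk by auto
      have wz: "walk G ?zs" and lz: "2 \<le> length ?zs" and hz: "hd ?zs = p" and laz: "last ?zs = Y"
        using py unfolding mg_path_walk by auto
      have sx: "set xs \<subseteq> U" using walk_set_U[OF M wx lx] .
      have sz: "set ?zs \<subseteq> U" using walk_set_U[OF M wz lz] .
      have NN: "\<And>v. v \<in> U \<Longrightarrow> v \<notin> W0 \<Longrightarrow> v \<notin> W" using N by blast
      have ox: "wok (open_at (ext G p t) W) xs"
        by (rule wok_lift[OF _ sx]) (use px(2) WW NN in \<open>auto simp: blocked_wok\<close>)
      have oz: "wok (open_at (ext G p t) W) ?zs"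
        by (rule wok_lift[OF _ sz]) (use pyo WW NN in \<open>auto simp: blocked_wok\<close>)
      have nex: "xs \<noteq> []" and nez: "?zs \<noteq> []" using lx lz by auto
      have J: "open_at (ext G p t) W (xs ! (length xs - 2)) (hd ?zs) (?zs ! 1)"
      proof -
        have "p \<in> descendants G p" unfolding descendants_def by simp
        then have "t \<in> descendants (ext G p t) p" by (rule desc_ext_p[OF M tU pU])
        moreover have "p \<notin> W" using 4 WW pt[OF M tU pU] by auto
        ultimately show ?thesis unfolding open_at_def hz using WW by auto
      qed
      have ow: "wok (open_at (ext G p t) W) (butlast xs @ ?zs)"
        by (rule wok_concat[OF ox oz nex nez]) (use lax hz J in auto)
      have ww: "walk (ext G p t) (butlast xs @ ?zs)"
        by (rule walk_concat[OF walk_lift[OF wx] walk_lift[OF wz] nex nez]) (use lax hz in auto)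
      have hh: "hd (butlast xs @ ?zs) = X"
      proof -
        have "length (butlast xs) \<ge> 1" using lx by simp
        then have bn: "butlast xs \<noteq> []" by (metis le_numeral_extra(2) list.size(3))
        have "hd (butlast xs) = butlast xs ! 0" using bn by (simp add: hd_conv_nth)
        also have "\<dots> = xs ! 0" using lx by (simp add: nth_butlast)
        also have "\<dots> = X" using hx nex by (simp add: hd_conv_nth)
        finally show ?thesis using bn by simp
      qed
      have ll: "last (butlast xs @ ?zs) = Y" using laz nez by simp
      obtain q where "mg_path (ext G p t) X Y q" "\<not> blocked (ext G p t) q W"
        using walk_to_path[OF ww ow] hh ll XY nez by (metis append_is_Nil_conv)
      then show False using S unfolding m_separated_def by blast
    qed
    show ?thesis
    proof (cases "m_separated G X p W0")
      case True
      then have "cond_indep P X p W0" using GM' XU pU 4 W0pX by blast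
      then show ?thesis unfolding WW
        by (rule CI_3c[where P=P and p=p and t=t and f=f, OF fd0 ci1])
    next
      case False
      then have "m_separated G Y p W0" using sepii by blast
      then have "cond_indep P Y p W0" using GM' YU pU 4 W0pX by blast
      moreover have "cond_indep P Y X (insert p W0)" using ci1 by (rule cond_indep_sym)
      ultimately have "cond_indep P Y X (insert t W0)"
        using CI_3c[where P=P and p=p and t=t and f=f, OF fd0] by blast
      then show ?thesis unfolding WW by (rule cond_indep_sym)
    qed
  qed
qed

end


lemma GMP_ext:
  assumes M: "is_MAG U G" and tU: "t \<notin> U" and pU: "p \<in> U"
    and fd0: "\<forall>\<omega>\<in>set_pmf P. \<omega> t = f (\<omega> p)" and GM: "GMP P U G"
  shows "GMP P (insert t U) (ext G p t)"
  unfolding GMP_def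
proof (intro ballI allI impI)
  fix X Y W assume X: "X \<in> insert t U" and Y: "Y \<in> insert t U"
    and H: "X \<noteq> Y \<and> W \<subseteq> insert t U - {X, Y} \<and> m_separated (ext G p t) X Y W"
  consider "X = t" | "Y = t" | "X \<in> U" "Y \<in> U" using X Y by auto
  then show "cond_indep P X Y W"
  proof cases
    case 1
    then have "Y \<in> U" "W \<subseteq> U - {Y}" using Y H by auto
    moreover have "m_separated (ext G p t) t Y W" using H 1 by simp
    ultimately show ?thesis using case_t[OF M tU pU fd0 GM] 1 by simp
  next
    case 2
    then have "X \<in> U" "W \<subseteq> U - {X}" using X H by auto
    moreover have "m_separated (ext G p t) X t W" using H 2 by simp
    then have "m_separated (ext G p t) t X W" by (rule m_separated_sym)
    ultimately have "cond_indep P t X W" using case_t[OF M tU pU fd0 GM] by simp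
    then have "cond_indep P X t W" by (rule cond_indep_sym)
    then show ?thesis using 2 by simp
  next
    case 3
    then show ?thesis using case_U[OF M tU pU fd0 GM] H by simp
  qed
qed

lemma indep_contra:
  fixes P :: "('v \<Rightarrow> 'a) pmf"
  assumes CI: "cond_indep P t p {}" and fd0: "\<forall>\<omega>\<in>set_pmf P. \<omega> t = f (\<omega> p)"
    and nc: "\<exists>\<omega>1\<in>set_pmf P. \<exists>\<omega>2\<in>set_pmf P. \<omega>1 t \<noteq> \<omega>2 t"
  shows False
proof -
  obtain \<omega>1 \<omega>2 where w: "\<omega>1 \<in> set_pmf P" "\<omega>2 \<in> set_pmf P" "\<omega>1 t \<noteq> \<omega>2 t" using nc by blast
  define y where "y = \<omega>1 p"
  define x where "x = \<omega>1 t"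
  have xy: "x = f y" using fd0 w unfolding x_def y_def by blast
  have e: "prb P {\<omega>. \<omega> t = x \<and> \<omega> p = y} * prb P UNIV = prb P {\<omega>. \<omega> t = x} * prb P {\<omega>. \<omega> p = y}"
    using CI[unfolded cond_indep_def, rule_format, of x y \<omega>1] by simp
  have u: "prb P UNIV = 1" using measure_pmf.prob_space[of P] by simp
  have a: "prb P {\<omega>. \<omega> t = x \<and> \<omega> p = y} = prb P {\<omega>. \<omega> p = y}"
    by (rule prb_cong_supp) (use fd0 xy in auto)
  have pos: "prb P {\<omega>. \<omega> p = y} > 0" by (rule measure_pmf_posI[OF w(1)]) (simp add: y_def)
  have one: "prb P {\<omega>. \<omega> t = x} = 1" using e u a pos by simp
  have "prb P (UNIV - {\<omega>. \<omega> t = x}) = 1 - prb P {\<omega>. \<omega> t = x}"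
    using measure_pmf.prob_compl[of "{\<omega>. \<omega> t = x}" P] by simp
  then have z: "prb P (UNIV - {\<omega>. \<omega> t = x}) = 0" using one by simp
  have "prb P (UNIV - {\<omega>. \<omega> t = x}) > 0" by (rule measure_pmf_posI[OF w(2)]) (use w(3) x_def in auto)
  then show False using z by simp
qed

lemma walk_set_gen:
  assumes A: "\<And>x y. adj G x y \<Longrightarrow> x \<in> U \<and> y \<in> U" and w: "walk G xs" and l: "2 \<le> length xs"
  shows "set xs \<subseteq> U"
proof
  fix x assume x: "x \<in> set xs"
  then obtain k where k: "k < length xs" "xs ! k = x" by (auto simp: in_set_conv_nth)
  show "x \<in> U"
  proof (cases "Suc k < length xs")
    case True
    then show ?thesis using w k A unfolding walk_def by blast
  next
    case False
    then have "Suc (k - 1) < length xs" "xs ! Suc (k - 1) = x" using k l by auto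
    then show ?thesis using w k A unfolding walk_def by metis
  qed
qed

definition restr :: "'v mixed_graph \<Rightarrow> 'v set \<Rightarrow> 'v mixed_graph" where
  "restr G U = (dir G \<inter> U \<times> U, {e \<in> bid G. e \<subseteq> U})"

lemma dir_restr [simp]: "dir (restr G U) = dir G \<inter> U \<times> U"
  and bid_restr [simp]: "bid (restr G U) = {e \<in> bid G. e \<subseteq> U}"
  unfolding restr_def dir_def bid_def by simp_all

lemma adj_restr: "adj (restr G U) x y \<longleftrightarrow> adj G x y \<and> x \<in> U \<and> y \<in> U"
  unfolding adj_def by auto

lemma arrow_restr: "a \<in> U \<Longrightarrow> b \<in> U \<Longrightarrow> arrow_into (restr G U) a b \<longleftrightarrow> arrow_into G a b"
  unfolding arrow_into_def by auto

lemma desc_restr_sub: "descendants (restr G U) v \<subseteq> descendants G v"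
  unfolding descendants_def by (auto intro: rtrancl_mono[THEN subsetD])

lemma rtr_into_out:
  assumes "(a, b) \<in> (dir G \<inter> U \<times> U)\<^sup>*" "a \<noteq> b"
  shows "a \<in> U \<and> b \<in> U"
  using assms by (induction rule: rtrancl_induct) auto


context
  fixes G' :: "'v mixed_graph" and U :: "'v set" and p t :: 'v
  assumes M': "is_MAG (insert t U) G'" and tU: "t \<notin> U" and pU: "p \<in> U"
    and deg: "\<And>z. adj G' t z \<Longrightarrow> z = p"
begin

lemma deg': "adj G' z t \<Longrightarrow> z = p" using deg adj_sym by metis

lemma dir_G'_sub: "dir G' \<subseteq> (dir G' \<inter> U \<times> U) \<union> {(p, t), (t, p)}"
proof
  fix e assume e: "e \<in> dir G'"
  obtain a b where ab: "e = (a, b)" by (cases e)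
  have "adj G' a b" using e ab unfolding adj_def by auto
  then have "a \<in> insert t U" "b \<in> insert t U" using adj_MAG[OF M'] by auto
  moreover have "a = t \<Longrightarrow> b = p" using deg \<open>adj G' a b\<close> by auto
  moreover have "b = t \<Longrightarrow> a = p" using deg' \<open>adj G' a b\<close> by auto
  ultimately show "e \<in> (dir G' \<inter> U \<times> U) \<union> {(p, t), (t, p)}"
  proof (cases "a = t \<or> b = t")
    case True
    then have "e = (t, p) \<or> e = (p, t)" using \<open>a = t \<Longrightarrow> b = p\<close> \<open>b = t \<Longrightarrow> a = p\<close> ab by blast
    then show ?thesis by blast
  next
    case False
    then have "a \<in> U" "b \<in> U" using \<open>a \<in> insert t U\<close> \<open>b \<in> insert t U\<close> by blast+
    then show ?thesis using e ab by blast
  qed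
qed

lemma desc_key:
  assumes vU: "v \<in> U" and dU: "d \<in> U" and vd: "(v, d) \<in> (dir G')\<^sup>*"
  shows "(v, d) \<in> (dir (restr G' U))\<^sup>*"
proof -
  let ?r = "dir G' \<inter> U \<times> U"
  have rr: "dir (restr G' U) = ?r" by simp
  note m4 = M'[unfolded is_MAG_def, THEN conjunct2, THEN conjunct2, THEN conjunct2, THEN conjunct1]
  have anti: "\<not> ((p, t) \<in> dir G' \<and> (t, p) \<in> dir G')" using m4 by blast
  have "(v, d) \<in> ?r\<^sup>*"
  proof (cases "(t, p) \<in> dir G'")
    case False
    have sub: "dir G' \<subseteq> insert (p, t) ?r"
    proof
      fix e assume "e \<in> dir G'"
      then have "e \<in> ?r \<union> {(p, t), (t, p)}" "e \<noteq> (t, p)" using dir_G'_sub False by blast+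
      then show "e \<in> insert (p, t) ?r" by blast
    qed
    have "(v, d) \<in> (insert (p, t) ?r)\<^sup>*" using rtrancl_mono[OF sub] vd by (rule subsetD)
    then have "(v, d) \<in> ?r\<^sup>* \<or> (t, d) \<in> ?r\<^sup>*" unfolding rtrancl_insert by blast
    moreover have "(t, d) \<notin> ?r\<^sup>*"
    proof
      assume "(t, d) \<in> ?r\<^sup>*"
      moreover have "t \<noteq> d" using tU dU by auto
      ultimately have "t \<in> U" using rtr_into_out[of t d G' U] by blast
      then show False using tU by blast
    qed
    ultimately show ?thesis by blast
  next
    case True
    then have F: "(p, t) \<notin> dir G'" using anti by blast
    have sub: "dir G' \<subseteq> insert (t, p) ?r"
    proof
      fix e assume "e \<in> dir G'"
      then have "e \<in> ?r \<union> {(p, t), (t, p)}" "e \<noteq> (p, t)" using dir_G'_sub F by blast+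
      then show "e \<in> insert (t, p) ?r" by blast
    qed
    have "(v, d) \<in> (insert (t, p) ?r)\<^sup>*" using rtrancl_mono[OF sub] vd by (rule subsetD)
    then have "(v, d) \<in> ?r\<^sup>* \<or> (v, t) \<in> ?r\<^sup>*" unfolding rtrancl_insert by blast
    moreover have "(v, t) \<notin> ?r\<^sup>*"
    proof
      assume "(v, t) \<in> ?r\<^sup>*"
      moreover have "v \<noteq> t" using tU vU by auto
      ultimately have "t \<in> U" using rtr_into_out[of v t G' U] by blast
      then show False using tU by blast
    qed
    ultimately show ?thesis by blast
  qed
  then show ?thesis unfolding rr .
qed

lemma desc_restr_U: "v \<in> U \<Longrightarrow> descendants G' v \<inter> U \<subseteq> descendants (restr G' U) v"
proof
  fix d assume v: "v \<in> U" and "d \<in> descendants G' v \<inter> U"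
  then have "(v, d) \<in> (dir G')\<^sup>*" "d \<in> U" unfolding descendants_def by auto
  then have "(v, d) \<in> (dir (restr G' U))\<^sup>*" using desc_key v by blast
  then show "d \<in> descendants (restr G' U) v" unfolding descendants_def by simp
qed

lemma walk_U': "walk G' xs \<Longrightarrow> 2 \<le> length xs \<Longrightarrow> set xs \<subseteq> insert t U"
  by (rule walk_set_U[OF M'])

lemma t_notin_path':
  assumes w: "walk G' xs" and d: "distinct xs" and h: "hd xs \<noteq> t" and l: "last xs \<noteq> t" and ne: "xs \<noteq> []"
  shows "t \<notin> set xs"
proof
  assume "t \<in> set xs"
  then obtain k where k: "k < length xs" "xs ! k = t" by (auto simp: in_set_conv_nth)
  have k0: "k \<noteq> 0"
  proof
    assume "k = 0" then show False using h k ne by (simp add: hd_conv_nth)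
  qed
  have k1: "Suc k < length xs" using l k ne by (metis Suc_lessI diff_Suc_1 last_conv_nth)
  have sk: "Suc (k - 1) = k" using k0 by simp
  have "adj G' (xs ! (k - 1)) (xs ! Suc (k - 1))" using w[unfolded walk_def, rule_format, of "k - 1"] k sk by simp
  then have a: "xs ! (k - 1) = p" using deg' k sk by auto
  have "adj G' (xs ! k) (xs ! Suc k)" using w k1 unfolding walk_def by auto
  then have b: "xs ! Suc k = p" using deg k by auto
  have "k - 1 \<noteq> Suc k" by auto
  then show False using a b d k1 unfolding distinct_conv_nth by (metis less_imp_diff_less Suc_lessD)
qed

lemma restr_MAG: "is_MAG U (restr G' U)"
proof -
  note MM = M'[unfolded is_MAG_def]
  note m1 = MM[THEN conjunct1]
  note m2 = MM[THEN conjunct2, THEN conjunct1]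
  note m3 = MM[THEN conjunct2, THEN conjunct2, THEN conjunct1]
  note m4 = MM[THEN conjunct2, THEN conjunct2, THEN conjunct2, THEN conjunct1]
  note m5 = MM[THEN conjunct2, THEN conjunct2, THEN conjunct2, THEN conjunct2, THEN conjunct1]
  note m6 = MM[THEN conjunct2, THEN conjunct2, THEN conjunct2, THEN conjunct2, THEN conjunct2, THEN conjunct1]
  note m7 = MM[THEN conjunct2, THEN conjunct2, THEN conjunct2, THEN conjunct2, THEN conjunct2, THEN conjunct2]
  let ?R = "restr G' U"
  have 1: "dir ?R \<subseteq> U \<times> U" by auto
  have 2: "\<forall>e\<in>bid ?R. \<exists>x y. e = {x, y} \<and> x \<noteq> y \<and> x \<in> U \<and> y \<in> U"
  proof
    fix e assume e: "e \<in> bid ?R"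
    then obtain x y where "e = {x, y}" "x \<noteq> y" using m2 by auto
    then show "\<exists>x y. e = {x, y} \<and> x \<noteq> y \<and> x \<in> U \<and> y \<in> U" using e by auto
  qed
  have 3: "\<forall>x. (x, x) \<notin> dir ?R" using m3 by auto
  have 4: "\<forall>x y. (x, y) \<in> dir ?R \<longrightarrow> (y, x) \<notin> dir ?R \<and> {x, y} \<notin> bid ?R" using m4 by auto
  have 5: "acyclic (dir ?R)" using m5 by (auto intro: acyclic_subset)
  have 6: "\<forall>x z. {x, z} \<in> bid ?R \<longrightarrow> (x, z) \<notin> (dir ?R)\<^sup>+"
  proof (intro allI impI)
    fix x z assume "{x, z} \<in> bid ?R"
    then have "{x, z} \<in> bid G'" by simp
    then have nn: "(x, z) \<notin> (dir G')\<^sup>+" using m6 by blast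
    show "(x, z) \<notin> (dir ?R)\<^sup>+"
    proof
      assume "(x, z) \<in> (dir ?R)\<^sup>+"
      moreover have "dir ?R \<subseteq> dir G'" by simp
      ultimately have "(x, z) \<in> (dir G')\<^sup>+" by (rule trancl_mono)
      then show False using nn by simp
    qed
  qed
  have 7: "\<forall>x\<in>U. \<forall>y\<in>U. x \<noteq> y \<and> \<not> adj ?R x y \<longrightarrow> (\<exists>W \<subseteq> U - {x, y}. m_separated ?R x y W)"
  proof (intro ballI impI)
    fix x y assume xU: "x \<in> U" and yU: "y \<in> U" and na: "x \<noteq> y \<and> \<not> adj ?R x y"
    then have "\<not> adj G' x y" unfolding adj_restr by auto
    then obtain W where W: "W \<subseteq> insert t U - {x, y}" "m_separated G' x y W" using m7 xU yU na by blast
    define W' where "W' = {c \<in> U - {x, y}. descendants G' c \<inter> W \<noteq> {}}"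
    have "m_separated ?R x y W'"
      unfolding m_separated_def
    proof (intro allI impI)
      fix xs assume pa: "mg_path ?R x y xs"
      then have w: "walk ?R xs" and l2: "2 \<le> length xs" unfolding mg_path_walk by auto
      have sU: "set xs \<subseteq> U" by (rule walk_set_gen[OF _ w l2]) (simp add: adj_restr)
      have pG: "mg_path G' x y xs" using pa unfolding mg_path_walk walk_def adj_restr by auto
      then have bG: "blocked G' xs W" using W(2) unfolding m_separated_def by blast
      show "blocked ?R xs W'"
      proof (rule ccontr)
        assume "\<not> blocked ?R xs W'"
        then have "wok (open_at ?R W') xs" unfolding blocked_wok by simp
        then have "wok (open_at G' W) xs"
        proof (rule wok_mono)
          fix a v b assume H: "a \<in> set xs" "v \<in> set xs" "b \<in> set xs" "open_at ?R W' a v b"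
          then have U: "a \<in> U" "v \<in> U" "b \<in> U" using sU by auto
          have D: "descendants ?R v \<inter> W' \<noteq> {} \<Longrightarrow> descendants G' v \<inter> W \<noteq> {}"
          proof -
            assume "descendants ?R v \<inter> W' \<noteq> {}"
            then obtain d where d: "d \<in> descendants ?R v" "d \<in> W'" by blast
            have "d \<in> descendants G' v" using desc_restr_sub[of G' U v] d(1) by (rule subsetD)
            moreover obtain w where "w \<in> descendants G' d" "w \<in> W" using d(2) unfolding W'_def by blast
            ultimately show "descendants G' v \<inter> W \<noteq> {}" unfolding descendants_def
              by (blast intro: rtrancl_trans)
          qed
          have N: "v \<notin> W' \<Longrightarrow> v \<notin> W"
          proof
            assume "v \<notin> W'" "v \<in> W"
            then have "v \<in> U - {x, y}" using W(1) U by auto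
            moreover have "v \<in> descendants G' v" unfolding descendants_def by simp
            ultimately have "v \<in> W'" using \<open>v \<in> W\<close> unfolding W'_def by blast
            then show False using \<open>v \<notin> W'\<close> by blast
          qed
          show "open_at G' W a v b" using H(4) D N U unfolding open_at_def by (simp add: arrow_restr)
        qed
        then show False using bG unfolding blocked_wok by simp
      qed
    qed
    moreover have "W' \<subseteq> U - {x, y}" unfolding W'_def by blast
    ultimately show "\<exists>W \<subseteq> U - {x, y}. m_separated ?R x y W" by blast
  qed
  show ?thesis unfolding is_MAG_def
    by (rule conjI[OF 1 conjI[OF 2 conjI[OF 3 conjI[OF 4 conjI[OF 5 conjI[OF 6 7]]]]]])
qed

lemma restr_GMP:
  assumes GM: "GMP P (insert t U) G'"
  shows "GMP P U (restr G' U)"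
  unfolding GMP_def
proof (intro ballI allI impI)
  let ?R = "restr G' U"
  fix X Y W assume XU: "X \<in> U" and YU: "Y \<in> U" and H: "X \<noteq> Y \<and> W \<subseteq> U - {X, Y} \<and> m_separated ?R X Y W"
  have "m_separated G' X Y W"
    unfolding m_separated_def
  proof (intro allI impI)
    fix xs assume pa: "mg_path G' X Y xs"
    then have w: "walk G' xs" and d: "distinct xs" and hl: "hd xs = X" "last xs = Y" and l2: "2 \<le> length xs"
      unfolding mg_path_walk by auto
    have ne: "xs \<noteq> []" using l2 by auto
    have tn: "t \<notin> set xs" using t_notin_path'[OF w d] hl XU YU tU ne by auto
    have sU: "set xs \<subseteq> U" using walk_U'[OF w l2] tn by auto
    have wR: "walk ?R xs" using w sU unfolding walk_def adj_restr by (auto dest: nth_mem)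
    have pR: "mg_path ?R X Y xs" using wR d hl l2 unfolding mg_path_walk by auto
    then have bR: "blocked ?R xs W" using H unfolding m_separated_def by blast
    show "blocked G' xs W"
    proof (rule ccontr)
      assume "\<not> blocked G' xs W"
      then have "wok (open_at G' W) xs" unfolding blocked_wok by simp
      then have "wok (open_at ?R W) xs"
      proof (rule wok_mono)
        fix a v b assume H2: "a \<in> set xs" "v \<in> set xs" "b \<in> set xs" "open_at G' W a v b"
        then have U: "a \<in> U" "v \<in> U" "b \<in> U" using sU by auto
        have "descendants G' v \<inter> W \<noteq> {} \<Longrightarrow> descendants ?R v \<inter> W \<noteq> {}"
          using desc_restr_U[OF U(2)] H by blast
        then show "open_at ?R W a v b" using H2(4) U unfolding open_at_def by (simp add: arrow_restr)
      qed
      then show False using bR unfolding blocked_wok by simp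
    qed
  qed
  moreover have "X \<in> insert t U" "Y \<in> insert t U" "W \<subseteq> insert t U - {X, Y}" using XU YU H by auto
  ultimately show "cond_indep P X Y W" using GM H unfolding GMP_def by blast
qed

lemma restr_skel: "skeleton (restr G' U) = skeleton G' - {{p, t}}"
proof
  show "skeleton (restr G' U) \<subseteq> skeleton G' - {{p, t}}"
    unfolding skeleton_def adj_restr using tU by (auto simp: doubleton_eq_iff)
  show "skeleton G' - {{p, t}} \<subseteq> skeleton (restr G' U)"
  proof
    fix e assume e: "e \<in> skeleton G' - {{p, t}}"
    then obtain x y where xy: "e = {x, y}" "adj G' x y" unfolding skeleton_def by blast
    have "x \<in> insert t U" "y \<in> insert t U" using adj_MAG[OF M' xy(2)] by auto
    moreover have "x \<noteq> t"
    proof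
      assume "x = t" then have "y = p" using deg xy by blast
      then show False using e xy \<open>x = t\<close> by (auto simp: insert_commute)
    qed
    moreover have "y \<noteq> t"
    proof
      assume "y = t" then have "x = p" using deg' xy by blast
      then show False using e xy \<open>y = t\<close> by auto
    qed
    ultimately show "e \<in> skeleton (restr G' U)" unfolding skeleton_def adj_restr using xy by auto
  qed
qed

end


lemma leaf_harm:
  fixes P :: "('v \<Rightarrow> 'a) pmf"
  assumes H: "harmonious P U S" and tU: "t \<notin> U" and pU: "p \<in> U" and fdp: "fdep P p t"
    and nc: "\<exists>\<omega>1\<in>set_pmf P. \<exists>\<omega>2\<in>set_pmf P. \<omega>1 t \<noteq> \<omega>2 t"
  shows "harmonious P (insert t U) (insert {p, t} S)"
proof -
  obtain f where "AE \<omega> in measure_pmf P. \<omega> t = f (\<omega> p)" using fdp unfolding fdep_def by blast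
  then have fd0: "\<forall>\<omega>\<in>set_pmf P. \<omega> t = f (\<omega> p)" by (simp add: AE_measure_pmf_iff)
  have sat12U: "sat12 P U S" using H unfolding harmonious_def by blast
  then obtain G where G: "is_MAG U G" "skeleton G = S" "GMP P U G" unfolding sat12_def by blast
  have sat: "sat12 P (insert t U) (insert {p, t} S)" unfolding sat12_def
  proof (intro exI conjI)
    show "is_MAG (insert t U) (ext G p t)" by (rule MAG_ext[OF G(1) tU pU])
    show "skeleton (ext G p t) = insert {p, t} S" using skeleton_ext[OF G(1) tU pU] G(2) by simp
    show "GMP P (insert t U) (ext G p t)" by (rule GMP_ext[OF G(1) tU pU fd0 G(3)])
  qed
  have Smin: "\<not> (\<exists>S'. S' \<subset> S \<and> sat12 P U S')" using H unfolding harmonious_def by blast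
  have SU: "\<And>e. e \<in> S \<Longrightarrow> t \<notin> e"
  proof -
    fix e assume "e \<in> S"
    then obtain x y where "e = {x, y}" "adj G x y" using G(2) unfolding skeleton_def by blast
    then show "t \<notin> e" using adj_MAG[OF G(1)] tU by auto
  qed
  have pt: "p \<noteq> t" using pU tU by auto
  have min: "\<not> (\<exists>S'. S' \<subset> insert {p, t} S \<and> sat12 P (insert t U) S')"
  proof
    assume "\<exists>S'. S' \<subset> insert {p, t} S \<and> sat12 P (insert t U) S'"
    then obtain S' G' where S'sub: "S' \<subset> insert {p, t} S" and M': "is_MAG (insert t U) G'"
      and sk: "skeleton G' = S'" and GM': "GMP P (insert t U) G'"
      unfolding sat12_def by blast
    have adjt: "z = p \<and> {p, t} \<in> S'" if a: "adj G' t z" for z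
    proof -
      have "{t, z} \<in> S'" using a sk unfolding skeleton_def by blast
      then have in1: "{t, z} \<in> insert {p, t} S" using S'sub by blast
      have "{t, z} \<notin> S" using SU by blast
      then have "{t, z} = {p, t}" using in1 by blast
      then have "z = p" using pt by (auto simp: doubleton_eq_iff)
      then show ?thesis using \<open>{t, z} \<in> S'\<close> by (simp add: insert_commute)
    qed
    show False
    proof (cases "{p, t} \<in> S'")
      case False
      then have noadj: "\<And>z. \<not> adj G' t z" using adjt by blast
      have "m_separated G' t p {}"
        unfolding m_separated_def
      proof (intro allI impI)
        fix xs assume "mg_path G' t p xs"
        then have w: "walk G' xs" and h: "hd xs = t" and l2: "2 \<le> length xs" unfolding mg_path_walk by auto
        have a: "adj G' (xs ! 0) (xs ! Suc 0)" using w l2 unfolding walk_def by auto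
        have "xs ! 0 = t" using h l2 by (cases xs) auto
        then have "adj G' t (xs ! Suc 0)" using a by simp
        then show "blocked G' xs {}" using noadj by blast
      qed
      then have "cond_indep P t p {}" using GM'[unfolded GMP_def, rule_format, of t p "{}"] pU pt by simp
      then show False using indep_contra[OF _ fd0 nc] by blast
    next
      case True
      have deg: "\<And>z. adj G' t z \<Longrightarrow> z = p" using adjt by blast
      have "sat12 P U (S' - {{p, t}})" unfolding sat12_def
      proof (intro exI conjI)
        show "is_MAG U (restr G' U)" by (rule restr_MAG[OF M' tU pU deg])
        show "skeleton (restr G' U) = S' - {{p, t}}" using restr_skel[OF M' tU pU deg] sk by simp
        show "GMP P U (restr G' U)" by (rule restr_GMP[OF M' tU pU deg GM'])
      qed
      moreover have "S' - {{p, t}} \<subset> S"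
      proof
        have ptS: "{p, t} \<notin> S" using SU by blast
        show sub: "S' - {{p, t}} \<subseteq> S" using S'sub by blast
        show "S' - {{p, t}} \<noteq> S"
        proof
          assume "S' - {{p, t}} = S"
          then have "S' = insert {p, t} S" using True by blast
          then show False using S'sub by blast
        qed
      qed
      ultimately show False using Smin by blast
    qed
  qed
  show ?thesis unfolding harmonious_def using sat min by blast
qed

lemma run_ind:
  fixes P :: "('v \<Rightarrow> 'a) pmf"
  assumes run: "(stage1_step P V)\<^sup>*\<^sup>* s (R, S2)" and H: "harmonious P R S1"
    and nc: "\<forall>X\<in>V. \<exists>\<omega>1\<in>set_pmf P. \<exists>\<omega>2\<in>set_pmf P. \<omega>1 X \<noteq> \<omega>2 X"
  shows "\<exists>T. S2 = snd s \<union> T \<and> harmonious P (fst s) (S1 \<union> T)"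
  using run
proof (induction rule: converse_rtranclp_induct)
  case base
  show ?case using H by (intro exI[of _ "{}"]) simp
next
  case (step y z)
  from step.hyps(1) obtain C S X Y where yz: "y = (C, S)" "z = (C - {X}, insert {X, Y} S)"
    and XC: "X \<in> C" and YC: "Y \<in> C" and fg: "(Y, X) \<in> fd_graph P V"
    by (cases rule: stage1_step.cases) blast
  obtain T where T: "S2 = snd z \<union> T" "harmonious P (fst z) (S1 \<union> T)" using step.IH by blast
  have XV: "X \<in> V" and XY: "Y \<noteq> X" and fdp: "fdep P Y X" using fg unfolding fd_graph_def by auto
  have h: "harmonious P (insert X (C - {X})) (insert {Y, X} (S1 \<union> T))"
    by (rule leaf_harm) (use T yz XY YC fdp nc XV in auto)
  have e1: "insert X (C - {X}) = C" using XC by auto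
  have e2: "insert {Y, X} (S1 \<union> T) = S1 \<union> insert {X, Y} T" by (auto simp: insert_commute)
  show ?case
  proof (intro exI conjI)
    show "S2 = snd y \<union> insert {X, Y} T" using T yz by auto
    show "harmonious P (fst y) (S1 \<union> insert {X, Y} T)" using h e1 e2 yz by simp
  qed
qed

theorem theorem3p6:
  fixes P :: "('v \<Rightarrow> 'a) pmf" and V R :: "'v set" and S1 S2 :: "'v set set"
  assumes "finite V"
    and "\<forall>X\<in>V. \<exists>\<omega>1\<in>set_pmf P. \<exists>\<omega>2\<in>set_pmf P. \<omega>1 X \<noteq> \<omega>2 X"
    and "acyclic (fd_graph P V)"
    and "stage1_run P V R S2"
    and "harmonious P R S1"
  shows "harmonious P V (S1 \<union> S2)"
proof -
  have "(stage1_step P V)\<^sup>*\<^sup>* (V, {}) (R, S2)" using assms(4) unfolding stage1_run_def by blast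
  from run_ind[OF this assms(5) assms(2)] obtain T where "S2 = {} \<union> T" "harmonious P V (S1 \<union> T)" by auto
  then show ?thesis by simp
qed


end
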